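(* Let $\gamma$ be a POS, $\mu$ an extremal point of $\mathcal G(\gamma)$ and $(\Lambda_n)_{n\in\mathbb N}$ an increasing sequence of time boxes with $\bigcup_n\Lambda_n=S$. Then: (i) for every bounded local function $h$ on $\Omega$, $\gamma_{\Lambda_n}(h\mid\omega)\to\mu(h)$ for $\mu$-almost every $\omega$; (ii) if moreover $E$ is a compact metric space (with its Borel $\sigma$-algebra, $\Omega$ carrying the product topology), then there is a set of full $\mu$-measure of configurations $\omega$ such that $\gamma_{\Lambda_n}(h\mid\omega)\to\mu(h)$ as $n\to\infty$ simultaneously for all continuous local functions $h$ on $\Omega$.
   Context: $(S,\le)$ is a countable partially ordered set. For $x\in S$ write $x_-=\{y\in S:y<x\}$, $x_+=\{y\in S:y>x\}$. For $\Upsilon\subset S$: $\max(\Upsilon)=\{x\in\Upsilon: y\notin\Upsilon\text{ for all }y>x\}$, $\min(\Upsilon)=\{x\in\Upsilon: y\notin\Upsilon\text{ for all }y<x\}$, the past $\Upsilon_-=\{x\in S\setminus\Upsilon:\exists y\in\Upsilon,\ x<y\}$, the future $\Upsilon_+=\{x\in S\setminus\Upsilon:\exists y\in\Upsilon,\ x>y\}$, and the outer time $\Upsilon^*=\{x\in S: x\text{ is comparable with no }y\in\Upsilon\}$. Standing assumptions: for every $x\in S$, $\max(x_-)$ and $\min(x_+)$ are finite, every $y<x$ satisfies $y\le y_0<x$ for some $y_0\in\max(x_-)$, every $z>x$ satisfies $z\ge z_0>x$ for some $z_0\in\min(x_+)$; and $S$ has no minimal element. A finite set $\Lambda\subset S$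 is a time box if $\Lambda_-\cap\Lambda_+=\emptyset$; $\mathcal T_b$ denotes the set of time boxes. $(E,\mathcal E)$ is a measurable space, $\Omega=E^S$ with the product $\sigma$-algebra $\mathcal F$; $\mathcal F_\Upsilon$ is the $\sigma$-algebra generated by the coordinates in $\Upsilon$; a function is local if it is $\mathcal F_\Delta$-measurable for some finite $\Delta\subset S$. A proper oriented kernel on $\Lambda\in\mathcal T_b$ is a map $\gamma_\Lambda:\mathcal F_{S\setminus\Lambda_+}\times\Omega\to[0,1]$ such that (a) $\gamma_\Lambda(\cdot,\omega)$ is a probability measure for each $\omega$; (b) $\gamma_\Lambda(A,\cdot)$ is $\mathcal F_{\Lambda_-\cup\Lambda^*}$-measurable for each $A\in\mathcal F_{S\setminus\Lambda_+}$; (c) $\gamma_\Lambda(A,\cdot)$ is $\mathcal F_{\Lambda_-}$-measurable for each $A\in\mathcal F_\Lambda$; (d) $\gamma_\Lambda(B,\omega)=\mathbf 1_B(\omega)$ for all $B\in\mathcal F_{\Lambda_-\cup\Lambda^*}$. Write $\gamma_\Lambda(f\mid\omega)=\int f\,d\gamma_\Lambda(\cdot,\omega)$; compositions: $(\gamma_\Delta\gamma_\Lambda)(f\mid\omega)=\int\gamma_\Lambda(f\mid\sigma)\,\gamma_\Delta(d\sigma,\omega)$, $(\mu\gamma_\Lambda)(f)=\int\gamma_\Lambda(f\mid\sigma)\,\mu(d\sigma)$. A POS is a family $\gamma=(\gamma_\Lambda)_{\Lambda\in\mathcal T_b}$ of proper oriented kernels with $\gamma_\Delta\gamma_\Lambda=\gamma_\Delta$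 on $\mathcal F_{S\setminus\Lambda_+}$ whenever $\Lambda\subset\Delta$ are time boxes. $\mathcal G(\gamma)$ is the (convex) set of probability measures $\mu$ with $\mu\gamma_\Lambda=\mu$ on $\mathcal F_{S\setminus\Lambda_+}$ for all $\Lambda\in\mathcal T_b$. *)

theory Defs
  imports "HOL-Probability.Probability"
begin

section \<open>Order-theoretic notions on the countable poset S (= UNIV of type 's)\<close>

definition below :: "'s::order \<Rightarrow> 's set" where
  "below x = {y. y < x}"

definition above :: "'s::order \<Rightarrow> 's set" where
  "above x = {y. y > x}"

definition maxs :: "'s::order set \<Rightarrow> 's set" where
  "maxs U = {x \<in> U. \<forall>y. y > x \<longrightarrow> y \<notin> U}"

definition mins :: "'s::order set \<Rightarrow> 's set" where
  "mins U = {x \<in> U. \<forall>y. y < x \<longrightarrow> y \<notin> U}"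

definition past :: "'s::order set \<Rightarrow> 's set" where
  "past U = {x. x \<notin> U \<and> (\<exists>y\<in>U. x < y)}"

definition future :: "'s::order set \<Rightarrow> 's set" where
  "future U = {x. x \<notin> U \<and> (\<exists>y\<in>U. x > y)}"

definition outer :: "'s::order set \<Rightarrow> 's set" where
  "outer U = {x. \<forall>y\<in>U. \<not> (x \<le> y \<or> y \<le> x)}"

definition standing_poset :: "'s::order itself \<Rightarrow> bool" where
  "standing_poset _ \<longleftrightarrow>
     countable (UNIV :: 's set) \<and>
     (\<forall>x::'s. finite (maxs (below x)) \<and> finite (mins (above x)) \<and>
        (\<forall>y. y < x \<longrightarrow> (\<exists>y0 \<in> maxs (below x). y \<le> y0 \<and> y0 < x)) \<and>
        (\<forall>z. z > x \<longrightarrow> (\<exists>z0 \<in> mins (above x). z \<ge> z0 \<and> z0 > x))) \<and>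
     (\<forall>x::'s. \<exists>y. y < x)"

definition time_box :: "'s::order set \<Rightarrow> bool" where
  "time_box L \<longleftrightarrow> finite L \<and> past L \<inter> future L = {}"

definition Conf :: "'e measure \<Rightarrow> ('s \<Rightarrow> 'e) measure" where
  "Conf M = PiM UNIV (\<lambda>_. M)"

definition Fsub :: "'e measure \<Rightarrow> 's set \<Rightarrow> ('s \<Rightarrow> 'e) measure" where
  "Fsub M U = sigma (space (Conf M))
      (\<Union>x\<in>U. {(\<lambda>\<omega>. \<omega> x) -` A \<inter> space (Conf M) | A. A \<in> sets M})"

definition local_fun :: "'e measure \<Rightarrow> (('s \<Rightarrow> 'e) \<Rightarrow> real) \<Rightarrow> bool" where
  "local_fun M h \<longleftrightarrow> (\<exists>D. finite D \<and> h \<in> borel_measurable (Fsub M D))"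

definition bounded_fun :: "'e measure \<Rightarrow> (('s \<Rightarrow> 'e) \<Rightarrow> real) \<Rightarrow> bool" where
  "bounded_fun M h \<longleftrightarrow> (\<exists>B. \<forall>\<omega>\<in>space (Conf M). \<bar>h \<omega>\<bar> \<le> B)"

text \<open>A kernel on L is represented as a map \<omega> \<mapsto> \<gamma>_L(\<cdot>,\<omega>), a measure on F_{S\<setminus>L_+}.
  Then \<gamma>_L(A,\<omega>) = measure (g \<omega>) A.\<close>
definition proper_oriented_kernel ::
  "'e measure \<Rightarrow> 's::order set \<Rightarrow> (('s \<Rightarrow> 'e) \<Rightarrow> ('s \<Rightarrow> 'e) measure) \<Rightarrow> bool" where
  "proper_oriented_kernel M L g \<longleftrightarrow>
     (\<forall>\<omega>\<in>space (Conf M). prob_space (g \<omega>) \<and> sets (g \<omega>) = sets (Fsub M (- future L))) \<and>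
     (\<forall>A \<in> sets (Fsub M (- future L)).
        (\<lambda>\<omega>. measure (g \<omega>) A) \<in> borel_measurable (Fsub M (past L \<union> outer L))) \<and>
     (\<forall>A \<in> sets (Fsub M L).
        (\<lambda>\<omega>. measure (g \<omega>) A) \<in> borel_measurable (Fsub M (past L))) \<and>
     (\<forall>B \<in> sets (Fsub M (past L \<union> outer L)). \<forall>\<omega>\<in>space (Conf M).
        measure (g \<omega>) B = indicator B \<omega>)"

text \<open>Consistency \<gamma>_D \<gamma>_L = \<gamma>_D on F_{S\<setminus>L_+}, required for those events for which
  both sides are defined.\<close>
definition POS :: "'e measure \<Rightarrow> ('s::order set \<Rightarrow> ('s \<Rightarrow> 'e) \<Rightarrow> ('s \<Rightarrow> 'e) measure) \<Rightarrow> bool" where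
  "POS M \<gamma> \<longleftrightarrow>
     (\<forall>L. time_box L \<longrightarrow> proper_oriented_kernel M L (\<gamma> L)) \<and>
     (\<forall>L D. time_box L \<longrightarrow> time_box D \<longrightarrow> L \<subseteq> D \<longrightarrow>
        (\<forall>A \<in> sets (Fsub M (- future L)). \<forall>\<omega>\<in>space (Conf M).
           A \<in> sets (Fsub M (- future D)) \<longrightarrow>
           (\<lambda>\<sigma>. measure (\<gamma> L \<sigma>) A) \<in> borel_measurable (Fsub M (- future D)) \<longrightarrow>
           (\<integral>\<sigma>. measure (\<gamma> L \<sigma>) A \<partial>(\<gamma> D \<omega>)) = measure (\<gamma> D \<omega>) A))"

definition Gibbs :: "'e measure \<Rightarrow> ('s::order set \<Rightarrow> ('s \<Rightarrow> 'e) \<Rightarrow> ('s \<Rightarrow> 'e) measure)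
    \<Rightarrow> ('s \<Rightarrow> 'e) measure \<Rightarrow> bool" where
  "Gibbs M \<gamma> \<mu> \<longleftrightarrow> prob_space \<mu> \<and> sets \<mu> = sets (Conf M) \<and>
     (\<forall>L. time_box L \<longrightarrow> (\<forall>A \<in> sets (Fsub M (- future L)).
        (\<integral>\<omega>. measure (\<gamma> L \<omega>) A \<partial>\<mu>) = measure \<mu> A))"

definition extremal_Gibbs :: "'e measure \<Rightarrow> ('s::order set \<Rightarrow> ('s \<Rightarrow> 'e) \<Rightarrow> ('s \<Rightarrow> 'e) measure)
    \<Rightarrow> ('s \<Rightarrow> 'e) measure \<Rightarrow> bool" where
  "extremal_Gibbs M \<gamma> \<mu> \<longleftrightarrow> Gibbs M \<gamma> \<mu> \<and>
     (\<forall>\<nu>1 \<nu>2 (t::real). Gibbs M \<gamma> \<nu>1 \<longrightarrow> Gibbs M \<gamma> \<nu>2 \<longrightarrow> 0 < t \<longrightarrow> t < 1 \<longrightarrow>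
        (\<forall>A \<in> sets (Conf M). measure \<mu> A = t * measure \<nu>1 A + (1 - t) * measure \<nu>2 A) \<longrightarrow>
        (\<forall>A \<in> sets (Conf M). measure \<nu>1 A = measure \<mu> A \<and> measure \<nu>2 A = measure \<mu> A))"

end

theory Submission
  imports Defs
begin


lemma lim_shift: "lim (\<lambda>i. f (i + N)) = (lim f :: real)"
proof -
  have "(\<lambda>L. (\<lambda>i. f (i + N)) \<longlonglongrightarrow> L) = (\<lambda>L. f \<longlonglongrightarrow> L)"
    using LIMSEQ_ignore_initial_segment LIMSEQ_offset by (intro ext iffI) blast+
  then show ?thesis unfolding lim_def by simp
qed

locale bmart = prob_space M for M :: "'a measure" +
  fixes F :: "nat \<Rightarrow> 'a measure" and X :: "nat \<Rightarrow> 'a \<Rightarrow> real" and h :: "'a \<Rightarrow> real" and B :: real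
  assumes subalg: "\<And>n. subalgebra M (F n)"
  and decr: "\<And>n m. n \<le> m \<Longrightarrow> sets (F m) \<subseteq> sets (F n)"
  and Xmeas: "\<And>n. X n \<in> borel_measurable (F n)"
  and Xbd: "\<And>n \<omega>. \<omega> \<in> space M \<Longrightarrow> \<bar>X n \<omega>\<bar> \<le> B"
  and hmeas: "h \<in> borel_measurable M" and hbd: "\<And>\<omega>. \<omega> \<in> space M \<Longrightarrow> \<bar>h \<omega>\<bar> \<le> B"
  and ce: "\<And>n f C. f \<in> borel_measurable (F n) \<Longrightarrow> (\<And>\<omega>. \<omega> \<in> space M \<Longrightarrow> \<bar>f \<omega>\<bar> \<le> C) \<Longrightarrow>
            (\<integral>\<omega>. f \<omega> * X n \<omega> \<partial>M) = (\<integral>\<omega>. f \<omega> * h \<omega> \<partial>M)"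
  and triv: "\<And>A. (\<And>n. A \<in> sets (F n)) \<Longrightarrow> prob A = 0 \<or> prob A = 1"
begin

definition bdd :: "('a \<Rightarrow> real) \<Rightarrow> bool" where
  "bdd f \<longleftrightarrow> f \<in> borel_measurable M \<and> (\<exists>C. \<forall>\<omega>\<in>space M. \<bar>f \<omega>\<bar> \<le> C)"

lemma bdd_int: "bdd f \<Longrightarrow> integrable M f"
  unfolding bdd_def by (auto intro!: integrable_const_bound[where B="C" for C] AE_I2)

lemma bdd_mult: assumes "bdd f" "bdd g" shows "bdd (\<lambda>x. f x * g x)"
proof -
  obtain C1 C2 where c: "\<forall>\<omega>\<in>space M. \<bar>f \<omega>\<bar> \<le> C1" "\<forall>\<omega>\<in>space M. \<bar>g \<omega>\<bar> \<le> C2"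
    using assms unfolding bdd_def by auto
  have "\<forall>\<omega>\<in>space M. \<bar>f \<omega> * g \<omega>\<bar> \<le> C1 * C2"
  proof
    fix \<omega> assume "\<omega> \<in> space M"
    then have "\<bar>f \<omega>\<bar> \<le> C1" "\<bar>g \<omega>\<bar> \<le> C2" using c by auto
    then show "\<bar>f \<omega> * g \<omega>\<bar> \<le> C1 * C2"
      by (simp add: abs_mult mult_mono)
  qed
  then show ?thesis using assms unfolding bdd_def by auto
qed

lemma bdd_add: assumes "bdd f" "bdd g" shows "bdd (\<lambda>x. f x + g x)"
proof -
  obtain C1 C2 where c: "\<forall>\<omega>\<in>space M. \<bar>f \<omega>\<bar> \<le> C1" "\<forall>\<omega>\<in>space M. \<bar>g \<omega>\<bar> \<le> C2"
    using assms unfolding bdd_def by auto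
  have "\<forall>\<omega>\<in>space M. \<bar>f \<omega> + g \<omega>\<bar> \<le> C1 + C2"
    using c by (smt (verit))
  then show ?thesis using assms unfolding bdd_def by auto
qed

lemma bdd_diff: assumes "bdd f" "bdd g" shows "bdd (\<lambda>x. f x - g x)"
proof -
  obtain C1 C2 where c: "\<forall>\<omega>\<in>space M. \<bar>f \<omega>\<bar> \<le> C1" "\<forall>\<omega>\<in>space M. \<bar>g \<omega>\<bar> \<le> C2"
    using assms unfolding bdd_def by auto
  have "\<forall>\<omega>\<in>space M. \<bar>f \<omega> - g \<omega>\<bar> \<le> C1 + C2"
    using c by (smt (verit))
  then show ?thesis using assms unfolding bdd_def by auto
qed

lemma bdd_const: "bdd (\<lambda>x. c)"
  unfolding bdd_def by auto

lemma bdd_ind: "A \<in> sets M \<Longrightarrow> bdd (indicator A)"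
  unfolding bdd_def by (auto intro!: exI[of _ 1] simp: indicator_def)

lemma subalg_meas: "f \<in> borel_measurable (F n) \<Longrightarrow> f \<in> borel_measurable M"
  using measurable_from_subalg[OF subalg] by blast

lemma space_F[simp]: "space (F n) = space M"
  using subalg[of n] unfolding subalgebra_def by auto

lemma sets_F: "sets (F n) \<subseteq> sets M"
  using subalg[of n] unfolding subalgebra_def by auto

lemma meas_mono: "n \<le> m \<Longrightarrow> f \<in> borel_measurable (F m) \<Longrightarrow> f \<in> borel_measurable (F n)"
  by (rule measurable_from_subalg[of "F n" "F m"]) (auto simp: subalgebra_def decr)

lemma XM[measurable]: "X n \<in> borel_measurable M"
  using subalg_meas[OF Xmeas] .

lemma bddX: "bdd (X n)"
  unfolding bdd_def using Xbd by auto

lemma bddh: "bdd h"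
  unfolding bdd_def using hbd hmeas by auto

lemma ce2: assumes "n \<le> m" "f \<in> borel_measurable (F m)" "\<And>\<omega>. \<omega> \<in> space M \<Longrightarrow> \<bar>f \<omega>\<bar> \<le> C"
  shows "(\<integral>\<omega>. f \<omega> * X n \<omega> \<partial>M) = (\<integral>\<omega>. f \<omega> * X m \<omega> \<partial>M)"
  using ce[OF meas_mono[OF assms(1,2)] assms(3)] ce[OF assms(2,3)] by simp

lemma sq_le:
  assumes "bdd u" "bdd v" "bdd w" "(\<integral>\<omega>. w \<omega> * u \<omega> * v \<omega> \<partial>M) = (\<integral>\<omega>. w \<omega> * u \<omega> * u \<omega> \<partial>M)"
    "\<And>\<omega>. \<omega> \<in> space M \<Longrightarrow> 0 \<le> w \<omega>"
  shows "(\<integral>\<omega>. w \<omega> * (u \<omega>)\<^sup>2 \<partial>M) \<le> (\<integral>\<omega>. w \<omega> * (v \<omega>)\<^sup>2 \<partial>M)"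
proof -
  have i1: "integrable M (\<lambda>\<omega>. w \<omega> * u \<omega> * v \<omega>)" "integrable M (\<lambda>\<omega>. w \<omega> * u \<omega> * u \<omega>)"
    "integrable M (\<lambda>\<omega>. w \<omega> * v \<omega> * v \<omega>)"
    using assms by (auto intro!: bdd_int bdd_mult)
  have "0 \<le> (\<integral>\<omega>. w \<omega> * (v \<omega> - u \<omega>)\<^sup>2 \<partial>M)"
    using assms(5) by (intro Bochner_Integration.integral_nonneg) auto
  also have "\<dots> = (\<integral>\<omega>. (w \<omega> * v \<omega> * v \<omega> + w \<omega> * u \<omega> * u \<omega>) - 2 * (w \<omega> * u \<omega> * v \<omega>) \<partial>M)"
    by (rule Bochner_Integration.integral_cong) (auto simp: power2_eq_square algebra_simps)
  also have "\<dots> = (\<integral>\<omega>. w \<omega> * v \<omega> * v \<omega> \<partial>M) - (\<integral>\<omega>. w \<omega> * u \<omega> * u \<omega> \<partial>M)"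
    using i1 assms(4) by simp
  finally show ?thesis by (simp add: power2_eq_square mult.assoc)
qed

definition a :: "nat \<Rightarrow> real" where "a n = (\<integral>\<omega>. (X n \<omega>)\<^sup>2 \<partial>M)"

lemma sq_diff: assumes "n \<le> m" shows "(\<integral>\<omega>. (X n \<omega> - X m \<omega>)\<^sup>2 \<partial>M) = a n - a m"
proof -
  have cross: "(\<integral>\<omega>. X m \<omega> * X n \<omega> \<partial>M) = (\<integral>\<omega>. X m \<omega> * X m \<omega> \<partial>M)"
    using ce2[OF assms Xmeas Xbd] .
  have i1: "integrable M (\<lambda>\<omega>. X m \<omega> * X n \<omega>)" "integrable M (\<lambda>\<omega>. X m \<omega> * X m \<omega>)"
    "integrable M (\<lambda>\<omega>. X n \<omega> * X n \<omega>)"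
    by (auto intro!: bdd_int bdd_mult bddX)
  have "(\<integral>\<omega>. (X n \<omega> - X m \<omega>)\<^sup>2 \<partial>M) = (\<integral>\<omega>. (X n \<omega> * X n \<omega> + X m \<omega> * X m \<omega>) - 2 * (X m \<omega> * X n \<omega>) \<partial>M)"
    by (rule Bochner_Integration.integral_cong) (auto simp: power2_eq_square algebra_simps)
  also have "\<dots> = (\<integral>\<omega>. X n \<omega> * X n \<omega> \<partial>M) - (\<integral>\<omega>. X m \<omega> * X m \<omega> \<partial>M)"
    using i1 cross by simp
  finally show ?thesis unfolding a_def by (simp add: power2_eq_square)
qed

lemma a_nonneg: "0 \<le> a n"
  unfolding a_def by (intro Bochner_Integration.integral_nonneg) auto

lemma a_decseq: "decseq a"
proof (rule decseq_SucI)
  fix n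
  have "0 \<le> (\<integral>\<omega>. (X n \<omega> - X (Suc n) \<omega>)\<^sup>2 \<partial>M)" by (intro Bochner_Integration.integral_nonneg) auto
  then show "a (Suc n) \<le> a n" using sq_diff[of n "Suc n"] by simp
qed

lemma cj: assumes "N \<le> n" "n \<le> K" "A \<in> sets (F n)"
  shows "(\<integral>\<omega>. indicator A \<omega> * (X n \<omega> - X K \<omega>)\<^sup>2 \<partial>M)
       \<le> (\<integral>\<omega>. indicator A \<omega> * (X N \<omega> - X K \<omega>)\<^sup>2 \<partial>M)"
proof -
  have AM: "A \<in> sets M" using assms(3) sets_F by auto
  have XnK[measurable]: "X K \<in> borel_measurable (F n)" using meas_mono[OF assms(2) Xmeas] .
  have Xn[measurable]: "X n \<in> borel_measurable (F n)" using Xmeas .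
  define g where "g \<omega> = indicator A \<omega> * (X n \<omega> - X K \<omega>)" for \<omega>
  have gm: "g \<in> borel_measurable (F n)" unfolding g_def using assms(3) by measurable
  have gb: "\<bar>g \<omega>\<bar> \<le> 2 * B" if "\<omega> \<in> space M" for \<omega>
  proof -
    have "\<bar>X n \<omega> - X K \<omega>\<bar> \<le> 2 * B" using Xbd[OF that, of n] Xbd[OF that, of K] by linarith
    then show ?thesis unfolding g_def by (auto simp: indicator_def)
  qed
  have e1: "(\<integral>\<omega>. g \<omega> * X N \<omega> \<partial>M) = (\<integral>\<omega>. g \<omega> * X n \<omega> \<partial>M)"
    using ce2[OF assms(1) gm gb] .
  have bg: "bdd g" unfolding bdd_def using gb subalg_meas[OF gm] by auto
  have i: "integrable M (\<lambda>\<omega>. g \<omega> * X N \<omega>)" "integrable M (\<lambda>\<omega>. g \<omega> * X n \<omega>)"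
     "integrable M (\<lambda>\<omega>. g \<omega> * X K \<omega>)"
    by (auto intro!: bdd_int bdd_mult bg bddX)
  have "(\<integral>\<omega>. g \<omega> * (X N \<omega> - X K \<omega>) \<partial>M) = (\<integral>\<omega>. g \<omega> * X N \<omega> - g \<omega> * X K \<omega> \<partial>M)"
    by (simp add: algebra_simps)
  also have "\<dots> = (\<integral>\<omega>. g \<omega> * X n \<omega> - g \<omega> * X K \<omega> \<partial>M)"
    using i e1 by simp
  also have "\<dots> = (\<integral>\<omega>. g \<omega> * (X n \<omega> - X K \<omega>) \<partial>M)"
    by (simp add: algebra_simps)
  finally have e2: "(\<integral>\<omega>. indicator A \<omega> * (X n \<omega> - X K \<omega>) * (X N \<omega> - X K \<omega>) \<partial>M)
      = (\<integral>\<omega>. indicator A \<omega> * (X n \<omega> - X K \<omega>) * (X n \<omega> - X K \<omega>) \<partial>M)"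
    unfolding g_def .
  show ?thesis
    by (rule sq_le[OF _ _ _ e2]) (auto intro!: bdd_diff bddX bdd_ind AM)
qed

lemma maximal:
  assumes "N \<le> K" "0 < \<delta>"
  shows "\<delta>\<^sup>2 * prob {\<omega>\<in>space M. \<exists>j\<in>{N..K}. \<delta> \<le> \<bar>X j \<omega> - X K \<omega>\<bar>} \<le> a N - a K"
proof -
  define H where "H n = {\<omega>\<in>space M. \<exists>j\<in>{n..K}. \<delta> \<le> \<bar>X j \<omega> - X K \<omega>\<bar>}" for n
  define Y where "Y \<omega> = (X N \<omega> - X K \<omega>)\<^sup>2" for \<omega>
  have Hsets: "H n \<in> sets (F n)" if "n \<le> K" for n
  proof -
    have "H n = (\<Union>j\<in>{n..K}. {\<omega>\<in>space (F n). \<delta> \<le> \<bar>X j \<omega> - X K \<omega>\<bar>})"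
      unfolding H_def by auto
    also have "\<dots> \<in> sets (F n)"
    proof (rule sets.finite_UN)
      fix j assume j: "j \<in> {n..K}"
      have [measurable]: "X j \<in> borel_measurable (F n)" using meas_mono[OF _ Xmeas] j by auto
      have [measurable]: "X K \<in> borel_measurable (F n)" using meas_mono[OF _ Xmeas] that by auto
      show "{\<omega>\<in>space (F n). \<delta> \<le> \<bar>X j \<omega> - X K \<omega>\<bar>} \<in> sets (F n)" by measurable
    qed auto
    finally show ?thesis .
  qed
  have HM: "H n \<in> sets M" if "n \<le> K" for n using Hsets[OF that] sets_F by auto
  have Y0: "0 \<le> Y \<omega>" for \<omega> unfolding Y_def by simp
  have bY: "bdd Y" unfolding Y_def power2_eq_square by (intro bdd_mult bdd_diff bddX)
  have key: "\<delta>\<^sup>2 * prob (H (K - k)) \<le> (\<integral>\<omega>. indicator (H (K - k)) \<omega> * Y \<omega> \<partial>M)" if "k \<le> K - N" for k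
    using that
  proof (induction k)
    case 0
    have "H K = {}" unfolding H_def using assms(2) by auto
    then show ?case by simp
  next
    case (Suc k)
    define n where "n = K - Suc k"
    have nK: "Suc n = K - k" "N \<le> n" "n \<le> K" using Suc.prems unfolding n_def by auto
    define An where "An = {\<omega>\<in>space M. \<delta> \<le> \<bar>X n \<omega> - X K \<omega>\<bar>} - H (Suc n)"
    have Hn: "H n = An \<union> H (Suc n)" "An \<inter> H (Suc n) = {}"
    proof -
      have "{n..K} = insert n {Suc n..K}" using nK(3) by auto
      then show "H n = An \<union> H (Suc n)" "An \<inter> H (Suc n) = {}"
        unfolding An_def H_def by auto
    qed
    have Hs_n: "H (Suc n) \<in> sets (F n)" using Hsets[of "Suc n"] decr[of n "Suc n"] nK by auto
    have An_n: "An \<in> sets (F n)" 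
    proof -
      have "An = H n - H (Suc n)" using Hn by auto
      then show ?thesis using Hsets[OF nK(3)] Hs_n by auto
    qed
    have AnM: "An \<in> sets M" using An_n sets_F by auto
    have HsM: "H (Suc n) \<in> sets M" using HM[of "Suc n"] nK by auto
    have "\<delta>\<^sup>2 * prob An = (\<integral>\<omega>. indicator An \<omega> * \<delta>\<^sup>2 \<partial>M)"
      using AnM by simp
    also have "\<dots> \<le> (\<integral>\<omega>. indicator An \<omega> * (X n \<omega> - X K \<omega>)\<^sup>2 \<partial>M)"
    proof (rule integral_mono)
      show "integrable M (\<lambda>\<omega>. indicator An \<omega> * \<delta>\<^sup>2)" using AnM by (auto intro!: bdd_int bdd_mult bdd_ind bdd_const)
      show "integrable M (\<lambda>\<omega>. indicator An \<omega> * (X n \<omega> - X K \<omega>)\<^sup>2)" 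
        using AnM unfolding power2_eq_square by (auto intro!: bdd_int bdd_mult bdd_ind bdd_diff bddX)
      fix \<omega> assume "\<omega> \<in> space M"
      show "indicator An \<omega> * \<delta>\<^sup>2 \<le> indicator An \<omega> * (X n \<omega> - X K \<omega>)\<^sup>2"
      proof (cases "\<omega> \<in> An")
        case True
        then have "\<delta> \<le> \<bar>X n \<omega> - X K \<omega>\<bar>" unfolding An_def by auto
        then have "\<delta>\<^sup>2 \<le> \<bar>X n \<omega> - X K \<omega>\<bar>\<^sup>2" using assms(2) by (intro power_mono) auto
        then show ?thesis using True by simp
      qed simp
    qed
    also have "\<dots> \<le> (\<integral>\<omega>. indicator An \<omega> * Y \<omega> \<partial>M)"
      unfolding Y_def using cj[OF nK(2) nK(3) An_n] .
    finally have s1: "\<delta>\<^sup>2 * prob An \<le> (\<integral>\<omega>. indicator An \<omega> * Y \<omega> \<partial>M)" .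
    have p: "prob (H n) = prob An + prob (H (Suc n))"
      using Hn AnM HsM by (simp add: finite_measure_Union)
    have ind: "indicator (H n) \<omega> * Y \<omega> = indicator An \<omega> * Y \<omega> + indicator (H (Suc n)) \<omega> * Y \<omega>" for \<omega>
      using Hn by (auto simp: indicator_def)
    have "(\<integral>\<omega>. indicator (H n) \<omega> * Y \<omega> \<partial>M)
        = (\<integral>\<omega>. indicator An \<omega> * Y \<omega> \<partial>M) + (\<integral>\<omega>. indicator (H (Suc n)) \<omega> * Y \<omega> \<partial>M)"
      unfolding ind using AnM HsM bY by (intro Bochner_Integration.integral_add bdd_int bdd_mult bdd_ind)
    moreover have IH: "\<delta>\<^sup>2 * prob (H (K - k)) \<le> (\<integral>\<omega>. indicator (H (K - k)) \<omega> * Y \<omega> \<partial>M)"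
      using Suc.IH Suc.prems by simp
    ultimately show ?case using s1 p nK(1) unfolding n_def[symmetric]
      by (simp add: distrib_left)
  qed
  have "\<delta>\<^sup>2 * prob (H N) \<le> (\<integral>\<omega>. indicator (H N) \<omega> * Y \<omega> \<partial>M)"
    using key[of "K - N"] assms(1) by simp
  also have "\<dots> \<le> (\<integral>\<omega>. Y \<omega> \<partial>M)"
    using HM[OF assms(1)] bY
    by (intro integral_mono bdd_int bdd_mult bdd_ind) (auto simp: Y_def[abs_def, symmetric] indicator_def Y0)
  also have "\<dots> = a N - a K" unfolding Y_def using sq_diff[OF assms(1)] .
  finally show ?thesis unfolding H_def .
qed

lemma ae_cauchy: "AE \<omega> in M. Cauchy (\<lambda>n. X n \<omega>)"
proof -
  obtain ainf where ainf: "a \<longlonglongrightarrow> ainf" "\<forall>i. ainf \<le> a i"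
    using decseq_convergent[OF a_decseq, of 0] a_nonneg by auto
  define E where "E \<delta> N K = {\<omega>\<in>space M. \<exists>n\<in>{N..K}. \<exists>m\<in>{N..K}. 2*\<delta> \<le> \<bar>X n \<omega> - X m \<omega>\<bar>}" for \<delta> N K
  have EM: "E \<delta> N K \<in> sets M" for \<delta> N K
  proof -
    have "E \<delta> N K = (\<Union>n\<in>{N..K}. \<Union>m\<in>{N..K}. {\<omega>\<in>space M. 2*\<delta> \<le> \<bar>X n \<omega> - X m \<omega>\<bar>})"
      unfolding E_def by auto
    also have "\<dots> \<in> sets M" by (intro sets.finite_UN) auto
    finally show ?thesis .
  qed
  have Ebound: "prob (E \<delta> N K) \<le> (a N - ainf) / \<delta>\<^sup>2" if "0 < \<delta>" for \<delta> N K
  proof (cases "N \<le> K")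
    case False
    then have "E \<delta> N K = {}" unfolding E_def by auto
    then show ?thesis using ainf(2)[rule_format, of N] by simp
  next
    case True
    let ?S = "{\<omega>\<in>space M. \<exists>j\<in>{N..K}. \<delta> \<le> \<bar>X j \<omega> - X K \<omega>\<bar>}"
    have sub: "E \<delta> N K \<subseteq> ?S"
    proof
      fix \<omega> assume "\<omega> \<in> E \<delta> N K"
      then obtain n m where nm: "n \<in> {N..K}" "m \<in> {N..K}" "2*\<delta> \<le> \<bar>X n \<omega> - X m \<omega>\<bar>" "\<omega> \<in> space M"
        unfolding E_def by auto
      then have "\<delta> \<le> \<bar>X n \<omega> - X K \<omega>\<bar> \<or> \<delta> \<le> \<bar>X m \<omega> - X K \<omega>\<bar>" by linarith
      then show "\<omega> \<in> ?S" using nm by auto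
    qed
    have SM: "?S \<in> sets M"
    proof -
      have "?S = (\<Union>j\<in>{N..K}. {\<omega>\<in>space M. \<delta> \<le> \<bar>X j \<omega> - X K \<omega>\<bar>})" by auto
      also have "\<dots> \<in> sets M" by (intro sets.finite_UN) auto
      finally show ?thesis .
    qed
    have "prob (E \<delta> N K) \<le> prob ?S" using sub SM by (rule finite_measure_mono)
    also have "\<dots> \<le> (a N - a K) / \<delta>\<^sup>2"
      using maximal[OF True that] that by (simp add: pos_le_divide_eq mult.commute)
    also have "\<dots> \<le> (a N - ainf) / \<delta>\<^sup>2"
      using ainf(2)[rule_format, of K] that by (intro divide_right_mono) auto
    finally show ?thesis .
  qed
  define U where "U \<delta> N = (\<Union>K. E \<delta> N K)" for \<delta> N
  have UM: "U \<delta> N \<in> sets M" for \<delta> N unfolding U_def using EM by auto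
  have Ubound: "prob (U \<delta> N) \<le> (a N - ainf) / \<delta>\<^sup>2" if "0 < \<delta>" for \<delta> N
  proof -
    have inc: "incseq (E \<delta> N)"
      by (rule incseq_SucI) (fastforce simp: E_def intro: le_SucI)
    have "(\<lambda>K. prob (E \<delta> N K)) \<longlonglongrightarrow> prob (U \<delta> N)"
      unfolding U_def using EM inc by (intro finite_Lim_measure_incseq) auto
    then show ?thesis using Ebound[OF that] by (intro LIMSEQ_le_const2) auto
  qed
  define Bad where "Bad \<delta> = (\<Inter>N. U \<delta> N)" for \<delta>
  have BadM: "Bad \<delta> \<in> sets M" for \<delta> unfolding Bad_def using UM by auto
  have Bad0: "prob (Bad \<delta>) = 0" if "0 < \<delta>" for \<delta>
  proof -
    have "\<forall>N. prob (Bad \<delta>) \<le> (a N - ainf) / \<delta>\<^sup>2"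
    proof
      fix N
      have "prob (Bad \<delta>) \<le> prob (U \<delta> N)" unfolding Bad_def using UM by (intro finite_measure_mono) auto
      then show "prob (Bad \<delta>) \<le> (a N - ainf) / \<delta>\<^sup>2" using Ubound[OF that, of N] by linarith
    qed
    moreover have "(\<lambda>N. (a N - ainf) / \<delta>\<^sup>2) \<longlonglongrightarrow> (ainf - ainf) / \<delta>\<^sup>2"
      using that by (intro tendsto_intros ainf(1)) auto
    ultimately have "prob (Bad \<delta>) \<le> (ainf - ainf) / \<delta>\<^sup>2"
      by (intro LIMSEQ_le_const[of "\<lambda>N. (a N - ainf) / \<delta>\<^sup>2"]) auto
    then have "prob (Bad \<delta>) \<le> 0" by simp
    then show ?thesis using measure_nonneg[of M "Bad \<delta>"] by linarith
  qed
  have "AE \<omega> in M. \<omega> \<notin> Bad (1 / Suc j)" for j :: nat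
  proof (rule AE_I')
    show "Bad (1 / Suc j) \<in> null_sets M"
      using Bad0[of "1 / Suc j"] BadM[of "1 / Suc j"] by (auto simp: emeasure_eq_measure intro!: null_setsI)
  qed auto
  then have "AE \<omega> in M. \<forall>j::nat. \<omega> \<notin> Bad (1 / Suc j)"
    by (simp add: AE_all_countable)
  with AE_space show ?thesis
  proof (eventually_elim)
    case (elim \<omega>)
    then have \<omega>: "\<forall>j::nat. \<omega> \<notin> Bad (1 / Suc j)" and \<omega>s: "\<omega> \<in> space M" by auto
    show "Cauchy (\<lambda>n. X n \<omega>)"
    proof (rule CauchyI)
      fix e :: real assume "0 < e"
      then obtain j where j: "inverse (real (Suc j)) < e / 2"
        using reals_Archimedean[of "e/2"] by auto
      define \<delta> where "\<delta> = 1 / real (Suc j)"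
      have "\<omega> \<notin> Bad \<delta>" using \<omega> unfolding \<delta>_def by auto
      then obtain N where N: "\<omega> \<notin> U \<delta> N" unfolding Bad_def by auto
      show "\<exists>N. \<forall>m\<ge>N. \<forall>n\<ge>N. norm (X m \<omega> - X n \<omega>) < e"
      proof (intro exI allI impI)
        fix m n assume mn: "N \<le> m" "N \<le> n"
        have "\<omega> \<notin> E \<delta> N (max m n)" using N unfolding U_def by auto
        moreover note \<omega>s
        ultimately have "\<bar>X m \<omega> - X n \<omega>\<bar> < 2 * \<delta>" using mn unfolding E_def by force
        also have "2 * \<delta> < e" using j unfolding \<delta>_def by (simp add: field_simps)
        finally show "norm (X m \<omega> - X n \<omega>) < e" by simp
      qed
    qed
  qed
qed

definition Z :: "'a \<Rightarrow> real" where "Z \<omega> = max (-B) (min B (lim (\<lambda>i. X i \<omega>)))"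

lemma Z_meas: "Z \<in> borel_measurable (F N)"
proof -
  have [measurable]: "(\<lambda>\<omega>. X (i + N) \<omega>) \<in> borel_measurable (F N)" for i
    using meas_mono[OF _ Xmeas, of N "i + N"] by simp
  have "Z = (\<lambda>\<omega>. max (-B) (min B (lim (\<lambda>i. X (i + N) \<omega>))))"
    unfolding Z_def using lim_shift[of "\<lambda>i. X i \<omega>" N for \<omega>] by simp
  also have "\<dots> \<in> borel_measurable (F N)" by measurable
  finally show ?thesis .
qed

lemma ZM[measurable]: "Z \<in> borel_measurable M" using subalg_meas[OF Z_meas] .

lemma Zbd: "\<bar>Z \<omega>\<bar> \<le> \<bar>B\<bar>" unfolding Z_def by auto

lemma ae_conv: "AE \<omega> in M. (\<lambda>n. X n \<omega>) \<longlonglongrightarrow> Z \<omega>"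
  using ae_cauchy AE_space
proof eventually_elim
  case (elim \<omega>)
  then have L: "(\<lambda>n. X n \<omega>) \<longlonglongrightarrow> lim (\<lambda>n. X n \<omega>)"
    by (simp add: Cauchy_convergent_iff convergent_LIMSEQ_iff)
  have "lim (\<lambda>n. X n \<omega>) \<le> B" using Xbd[OF elim(2)] by (intro LIMSEQ_le_const2[OF L]) (auto simp: abs_le_iff)
  moreover have "-B \<le> lim (\<lambda>n. X n \<omega>)"
  proof -
    have "\<forall>n. -B \<le> X n \<omega>" using Xbd[OF elim(2)] by (metis abs_le_iff minus_le_iff)
    then show ?thesis by (intro LIMSEQ_le_const[OF L]) auto
  qed
  ultimately have "Z \<omega> = lim (\<lambda>n. X n \<omega>)" unfolding Z_def by auto
  then show ?case using L by simp
qed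

lemma Zint: "integrable M Z"
  by (rule integrable_const_bound[where B="\<bar>B\<bar>"]) (auto simp: Zbd)

lemma Z_const: "AE \<omega> in M. Z \<omega> = (\<integral>\<omega>. Z \<omega> \<partial>M)"
proof -
  define z where "z = (\<integral>\<omega>. Z \<omega> \<partial>M)"
  have up: "AE \<omega> in M. Z \<omega> \<le> z"
  proof -
    define G where "G = {\<omega>\<in>space M. z < Z \<omega>}"
    have "G \<in> sets (F n)" for n
    proof -
      have [measurable]: "Z \<in> borel_measurable (F n)" by (rule Z_meas)
      have "{\<omega>\<in>space (F n). z < Z \<omega>} \<in> sets (F n)" by measurable
      then show ?thesis unfolding G_def by simp
    qed
    then have t: "prob G = 0 \<or> prob G = 1" by (rule triv)
    have GM: "G \<in> sets M" unfolding G_def by measurable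
    have "prob G \<noteq> 1"
    proof
      assume "prob G = 1"
      then have ae: "AE \<omega> in M. \<omega> \<in> G" by (rule AE_prob_1)
      have i: "integrable M (\<lambda>\<omega>. Z \<omega> - z)" using Zint by simp
      have "(\<integral>\<omega>. Z \<omega> - z \<partial>M) = 0" using Zint unfolding z_def by (simp add: prob_space)
      moreover have "AE \<omega> in M. 0 \<le> Z \<omega> - z" using ae by eventually_elim (auto simp: G_def)
      ultimately have "AE \<omega> in M. Z \<omega> - z = 0" using integral_nonneg_eq_0_iff_AE[OF i] by simp
      with ae have "AE \<omega> in M. False" by eventually_elim (auto simp: G_def)
      then show False by (simp add: AE_False)
    qed
    with t have "prob G = 0" by simp
    then have "AE \<omega> in M. \<omega> \<notin> G"
      using GM by (intro AE_I'[of G]) (auto simp: emeasure_eq_measure intro!: null_setsI)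
    then show ?thesis using AE_space by eventually_elim (auto simp: G_def)
  qed
  have lo: "AE \<omega> in M. z \<le> Z \<omega>"
  proof -
    define G where "G = {\<omega>\<in>space M. Z \<omega> < z}"
    have "G \<in> sets (F n)" for n
    proof -
      have [measurable]: "Z \<in> borel_measurable (F n)" by (rule Z_meas)
      have "{\<omega>\<in>space (F n). Z \<omega> < z} \<in> sets (F n)" by measurable
      then show ?thesis unfolding G_def by simp
    qed
    then have t: "prob G = 0 \<or> prob G = 1" by (rule triv)
    have GM: "G \<in> sets M" unfolding G_def by measurable
    have "prob G \<noteq> 1"
    proof
      assume "prob G = 1"
      then have ae: "AE \<omega> in M. \<omega> \<in> G" by (rule AE_prob_1)
      have i: "integrable M (\<lambda>\<omega>. z - Z \<omega>)" using Zint by simp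
      have "(\<integral>\<omega>. z - Z \<omega> \<partial>M) = 0" using Zint unfolding z_def by (simp add: prob_space)
      moreover have "AE \<omega> in M. 0 \<le> z - Z \<omega>" using ae by eventually_elim (auto simp: G_def)
      ultimately have "AE \<omega> in M. z - Z \<omega> = 0" using integral_nonneg_eq_0_iff_AE[OF i] by simp
      with ae have "AE \<omega> in M. False" by eventually_elim (auto simp: G_def)
      then show False by (simp add: AE_False)
    qed
    with t have "prob G = 0" by simp
    then have "AE \<omega> in M. \<omega> \<notin> G"
      using GM by (intro AE_I'[of G]) (auto simp: emeasure_eq_measure intro!: null_setsI)
    then show ?thesis using AE_space by eventually_elim (auto simp: G_def)
  qed
  from up lo show ?thesis unfolding z_def[symmetric] by eventually_elim auto
qed

theorem conv: "AE \<omega> in M. (\<lambda>n. X n \<omega>) \<longlonglongrightarrow> (\<integral>\<omega>. h \<omega> \<partial>M)"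
proof -
  have EX: "(\<integral>\<omega>. X n \<omega> \<partial>M) = (\<integral>\<omega>. h \<omega> \<partial>M)" for n
    using ce[of "\<lambda>_. 1" n 1] by simp
  have "(\<lambda>n. \<integral>\<omega>. X n \<omega> \<partial>M) \<longlonglongrightarrow> (\<integral>\<omega>. Z \<omega> \<partial>M)"
  proof (rule integral_dominated_convergence[where w="\<lambda>_. \<bar>B\<bar>"])
    show "AE x in M. (\<lambda>i. X i x) \<longlonglongrightarrow> Z x" by (rule ae_conv)
    show "AE x in M. norm (X i x) \<le> \<bar>B\<bar>" for i using Xbd by (intro AE_I2) (smt (verit) real_norm_def)
  qed auto
  then have hZ: "(\<integral>\<omega>. h \<omega> \<partial>M) = (\<integral>\<omega>. Z \<omega> \<partial>M)"
    unfolding EX by (simp add: LIMSEQ_const_iff)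
  show ?thesis using ae_conv Z_const by eventually_elim (simp add: hZ)
qed

end


definition gens :: "'e measure \<Rightarrow> 's set \<Rightarrow> ('s \<Rightarrow> 'e) set set" where
  "gens M U = (\<Union>x\<in>U. {(\<lambda>\<omega>. \<omega> x) -` A \<inter> space (Conf M) | A. A \<in> sets M})"

lemma gens_Pow: "gens M U \<subseteq> Pow (space (Conf M))"
  unfolding gens_def by auto

lemma sets_Fsub: "sets (Fsub M U) = sigma_sets (space (Conf M)) (gens M U)"
  unfolding Fsub_def gens_def[symmetric] using gens_Pow by (rule sets_measure_of)

lemma space_Fsub[simp]: "space (Fsub M U) = space (Conf M)"
  unfolding Fsub_def gens_def[symmetric] using gens_Pow by (rule space_measure_of)

lemma gens_Conf: "gens M U \<subseteq> sets (Conf M)"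
proof
  fix G assume "G \<in> gens M U"
  then obtain x A where G: "G = (\<lambda>\<omega>. \<omega> x) -` A \<inter> space (Conf M)" "A \<in> sets M"
    unfolding gens_def by auto
  have "(\<lambda>\<omega>. \<omega> x) \<in> measurable (Conf M) M"
    unfolding Conf_def using measurable_component_singleton[of x UNIV "\<lambda>_. M"] by simp
  then show "G \<in> sets (Conf M)" using G measurable_sets by blast
qed

lemma sets_Fsub_Conf: "sets (Fsub M U) \<subseteq> sets (Conf M)"
  unfolding sets_Fsub by (rule sets.sigma_sets_subset[OF gens_Conf])

lemma sets_Fsub_mono: "U \<subseteq> V \<Longrightarrow> sets (Fsub M U) \<subseteq> sets (Fsub M V)"
  unfolding sets_Fsub gens_def by (rule sigma_sets_mono') auto

lemma subalg_Fsub: "sets \<mu> = sets (Conf M) \<Longrightarrow> subalgebra \<mu> (Fsub M U)"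
  unfolding subalgebra_def using sets_Fsub_Conf[of M U] sets_eq_imp_space_eq[of \<mu> "Conf M"] by auto

lemma subalg_Fsub2: "U \<subseteq> V \<Longrightarrow> subalgebra (Fsub M V) (Fsub M U)"
  unfolding subalgebra_def using sets_Fsub_mono[of U V M] by auto

lemma meas_Fsub_mono: "U \<subseteq> V \<Longrightarrow> f \<in> measurable (Fsub M U) N \<Longrightarrow> f \<in> measurable (Fsub M V) N"
  by (rule measurable_from_subalg[OF subalg_Fsub2])

lemma po_decr:
  assumes "time_box D" "L \<subseteq> D"
  shows "past D \<union> outer D \<subseteq> past L \<union> outer L"
proof
  fix x assume x: "x \<in> past D \<union> outer D"
  have xD: "x \<notin> D" using x unfolding past_def outer_def by auto
  show "x \<in> past L \<union> outer L"
  proof (cases "\<exists>y\<in>L. x \<le> y \<or> y \<le> x")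
    case False then show ?thesis unfolding outer_def by auto
  next
    case True
    then obtain y where y: "y \<in> L" "x \<le> y \<or> y \<le> x" by auto
    have "x \<noteq> y" using y xD assms(2) by auto
    show ?thesis
    proof (cases "x < y")
      case True then show ?thesis unfolding past_def using y xD assms(2) by auto
    next
      case False
      then have "y < x" using y \<open>x \<noteq> y\<close> by auto
      then have xf: "x \<in> future D" unfolding future_def using y xD assms(2) by auto
      have "x \<notin> outer D" using xf \<open>y < x\<close> y assms(2) unfolding outer_def by auto
      then have "x \<in> past D" using x by auto
      then show ?thesis using xf assms(1) unfolding time_box_def by auto
    qed
  qed
qed

lemma po_sub: "time_box L \<Longrightarrow> past L \<union> outer L \<subseteq> - future L"
  unfolding time_box_def past_def outer_def future_def by auto

lemma fut_sub: "D \<subseteq> L \<Longrightarrow> D \<subseteq> - future L"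
  unfolding future_def by auto

lemma finite_in_seq:
  assumes "finite D" "incseq Lam" "(\<Union>n. Lam n) = UNIV"
  shows "\<exists>n. D \<subseteq> Lam n"
  using assms(1)
proof induction
  case empty then show ?case by auto
next
  case (insert x D)
  then obtain n where n: "D \<subseteq> Lam n" by auto
  obtain m where m: "x \<in> Lam m" using assms(3) by auto
  have "Lam n \<subseteq> Lam (max n m)" "Lam m \<subseteq> Lam (max n m)"
    using assms(2) unfolding incseq_def by auto
  then have "D \<subseteq> Lam (max n m)" "x \<in> Lam (max n m)" using n m by auto
  then show ?case by blast
qed

section \<open>Kernel as conditional expectation\<close>

lemma prob_emeasure: "prob_space Q \<Longrightarrow> emeasure Q A = ennreal (measure Q A)"
  by (simp add: finite_measure.emeasure_eq_measure prob_space.axioms(1))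

locale kern =
  fixes M :: "'e measure" and L :: "'s::order set" and K :: "('s \<Rightarrow> 'e) \<Rightarrow> ('s \<Rightarrow> 'e) measure"
    and \<mu> :: "('s \<Rightarrow> 'e) measure"
  assumes pok: "proper_oriented_kernel M L K" and tb: "time_box L"
  and pmu: "prob_space \<mu>" and smu: "sets \<mu> = sets (Conf M)"
  and gib: "\<And>A. A \<in> sets (Fsub M (- future L)) \<Longrightarrow> (\<integral>\<omega>. measure (K \<omega>) A \<partial>\<mu>) = measure \<mu> A"
begin

abbreviation "N \<equiv> Fsub M (- future L)"
abbreviation "P \<equiv> Fsub M (past L \<union> outer L)"

lemma space_mu: "space \<mu> = space (Conf M)"
  using sets_eq_imp_space_eq[OF smu] .

lemma K_prob: "\<omega> \<in> space (Conf M) \<Longrightarrow> prob_space (K \<omega>)"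
  using pok unfolding proper_oriented_kernel_def by auto

lemma K_sets: "\<omega> \<in> space (Conf M) \<Longrightarrow> sets (K \<omega>) = sets N"
  using pok unfolding proper_oriented_kernel_def by auto

lemma K_space: "\<omega> \<in> space (Conf M) \<Longrightarrow> space (K \<omega>) = space (Conf M)"
  using sets_eq_imp_space_eq[OF K_sets] by simp

lemma K_one: "\<omega> \<in> space (Conf M) \<Longrightarrow> emeasure (K \<omega>) (space (Conf M)) = 1"
  using prob_space.emeasure_space_1[OF K_prob] K_space by metis

lemma K_meas: "A \<in> sets N \<Longrightarrow> (\<lambda>\<omega>. measure (K \<omega>) A) \<in> borel_measurable P"
  using pok unfolding proper_oriented_kernel_def by auto

lemma K_ind: "B \<in> sets P \<Longrightarrow> \<omega> \<in> space (Conf M) \<Longrightarrow> measure (K \<omega>) B = indicator B \<omega>"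
  using pok unfolding proper_oriented_kernel_def by auto

lemma PN: "sets P \<subseteq> sets N"
  using sets_Fsub_mono[OF po_sub[OF tb]] .

lemma subPN: "subalgebra N P"
  using PN unfolding subalgebra_def by simp

lemma sub_mu_P: "subalgebra \<mu> P" using subalg_Fsub[OF smu] .
lemma sub_mu_N: "subalgebra \<mu> N" using subalg_Fsub[OF smu] .

lemma K_measurable: "K \<in> measurable P (subprob_algebra N)"
proof (rule measurable_subprob_algebra_generated[where \<Omega>="space N" and G="sets N"])
  show "sets N = sigma_sets (space N) (sets N)" by (rule sets.sigma_sets_eq[symmetric])
  show "Int_stable (sets N)" by (intro Int_stableI) auto
  show "sets N \<subseteq> Pow (space N)" by (rule sets.space_closed)
  fix a assume a: "a \<in> space P"
  then show "subprob_space (K a)" using K_prob by (auto intro: prob_space_imp_subprob_space)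
  show "sets (K a) = sets N" using K_sets a by simp
next
  fix A assume A: "A \<in> sets N"
  have "(\<lambda>a. ennreal (measure (K a) A)) \<in> borel_measurable P" using K_meas[OF A] by measurable
  then show "(\<lambda>a. emeasure (K a) A) \<in> borel_measurable P"
    by (rule measurable_cong[THEN iffD1, rotated]) (simp add: prob_emeasure[OF K_prob])
next
  show "(\<lambda>a. emeasure (K a) (space N)) \<in> borel_measurable P"
    by (rule measurable_cong[THEN iffD2, of _ _ "\<lambda>_. 1"])
       (auto simp: K_one)
qed

lemma K_measurable_mu: "K \<in> measurable \<mu> (subprob_algebra N)"
  using measurable_from_subalg[OF sub_mu_P K_measurable] .

lemma int_bd: "f \<in> borel_measurable \<mu> \<Longrightarrow> (\<And>x. x \<in> space (Conf M) \<Longrightarrow> \<bar>f x\<bar> \<le> C) \<Longrightarrow> integrable \<mu> (f :: _ \<Rightarrow> real)"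
proof -
  assume a: "f \<in> borel_measurable \<mu>" "\<And>x. x \<in> space (Conf M) \<Longrightarrow> \<bar>f x\<bar> \<le> C"
  interpret prob_space \<mu> by (rule pmu)
  show ?thesis using a by (intro integrable_const_bound[where B=C] AE_I2) (auto simp: space_mu)
qed

lemma psi_meas: "(h :: _ \<Rightarrow> real) \<in> borel_measurable N \<Longrightarrow> (\<lambda>\<omega>. \<integral>\<sigma>. h \<sigma> \<partial>K \<omega>) \<in> borel_measurable P"
proof -
  assume "h \<in> borel_measurable N"
  from measurable_compose[OF K_measurable integral_measurable_subprob_algebra[OF this]]
  show ?thesis by simp
qed

lemma hK_meas: "h \<in> borel_measurable N \<Longrightarrow> \<omega> \<in> space (Conf M) \<Longrightarrow> h \<in> borel_measurable (K \<omega>)"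
  using measurable_cong_sets[OF K_sets refl] by auto

lemma hK_int: "(h :: _ \<Rightarrow> real) \<in> borel_measurable N \<Longrightarrow> (\<And>x. x \<in> space (Conf M) \<Longrightarrow> \<bar>h x\<bar> \<le> C) \<Longrightarrow>
    \<omega> \<in> space (Conf M) \<Longrightarrow> integrable (K \<omega>) h"
proof -
  assume a: "h \<in> borel_measurable N" "\<And>x. x \<in> space (Conf M) \<Longrightarrow> \<bar>h x\<bar> \<le> C" "\<omega> \<in> space (Conf M)"
  interpret prob_space "K \<omega>" using K_prob[OF a(3)] .
  show ?thesis using a hK_meas[OF a(1,3)] by (intro integrable_const_bound[where B=C] AE_I2) (auto simp: K_space[OF a(3)])
qed

lemma psi_bd: fixes h :: "_ \<Rightarrow> real" assumes "h \<in> borel_measurable N" "\<And>x. x \<in> space (Conf M) \<Longrightarrow> \<bar>h x\<bar> \<le> C"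
    "\<omega> \<in> space (Conf M)"
  shows "\<bar>\<integral>\<sigma>. h \<sigma> \<partial>K \<omega>\<bar> \<le> C"
proof -
  interpret pK: prob_space "K \<omega>" using K_prob[OF assms(3)] .
  have i: "integrable (K \<omega>) h" using hK_int[OF assms] .
  have lo: "-C \<le> h x" if "x \<in> space (Conf M)" for x using assms(2)[OF that] by linarith
  have "(\<integral>\<sigma>. h \<sigma> \<partial>K \<omega>) \<le> C"
    using assms(2) by (intro pK.integral_le_const[OF i] AE_I2) (auto simp: K_space[OF assms(3)] abs_le_iff)
  moreover have "-C \<le> (\<integral>\<sigma>. h \<sigma> \<partial>K \<omega>)"
    using lo by (intro pK.integral_ge_const[OF i] AE_I2) (auto simp: K_space[OF assms(3)])
  ultimately show ?thesis by auto
qed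

lemma bind_eq: "restr_to_subalg \<mu> N = \<mu> \<bind> K"
proof (rule measure_eqI)
  have ne: "space \<mu> \<noteq> {}" using prob_space.not_empty[OF pmu] .
  show "sets (restr_to_subalg \<mu> N) = sets (\<mu> \<bind> K)"
    using sets_restr_to_subalg[OF sub_mu_N] sets_bind[of \<mu> K N, OF _ ne] K_sets space_mu by simp
  fix A assume "A \<in> sets (restr_to_subalg \<mu> N)"
  then have A: "A \<in> sets N" using sets_restr_to_subalg[OF sub_mu_N] by simp
  have m: "(\<lambda>\<omega>. measure (K \<omega>) A) \<in> borel_measurable \<mu>"
    using measurable_from_subalg[OF sub_mu_P K_meas[OF A]] .
  have int: "integrable \<mu> (\<lambda>\<omega>. measure (K \<omega>) A)"
    using m by (rule int_bd[where C=1]) (auto intro!: prob_space.prob_le_1[OF K_prob])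
  have "emeasure (\<mu> \<bind> K) A = (\<integral>\<^sup>+\<omega>. emeasure (K \<omega>) A \<partial>\<mu>)"
    using emeasure_bind[OF ne K_measurable_mu A] .
  also have "\<dots> = (\<integral>\<^sup>+\<omega>. ennreal (measure (K \<omega>) A) \<partial>\<mu>)"
    by (intro nn_integral_cong) (simp add: space_mu prob_emeasure[OF K_prob])
  also have "\<dots> = ennreal (\<integral>\<omega>. measure (K \<omega>) A \<partial>\<mu>)"
    using int by (intro nn_integral_eq_integral) auto
  also have "\<dots> = emeasure \<mu> A"
    using gib[OF A] by (simp add: prob_emeasure[OF pmu])
  also have "\<dots> = emeasure (restr_to_subalg \<mu> N) A"
    using emeasure_restr_to_subalg[OF sub_mu_N A] by simp
  finally show "emeasure (restr_to_subalg \<mu> N) A = emeasure (\<mu> \<bind> K) A" by simp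
qed

lemma ce_nonneg:
  fixes h :: "_ \<Rightarrow> real"
  assumes hm: "h \<in> borel_measurable N" and hb: "\<And>x. x \<in> space (Conf M) \<Longrightarrow> \<bar>h x\<bar> \<le> C"
    and h0: "\<And>x. x \<in> space (Conf M) \<Longrightarrow> 0 \<le> h x"
  shows "(\<integral>\<omega>. (\<integral>\<sigma>. h \<sigma> \<partial>K \<omega>) \<partial>\<mu>) = (\<integral>\<omega>. h \<omega> \<partial>\<mu>)"
proof -
  have hm': "(\<lambda>x. ennreal (h x)) \<in> borel_measurable N" using hm by measurable
  have hmu: "h \<in> borel_measurable \<mu>" using measurable_from_subalg[OF sub_mu_N hm] .
  have psim: "(\<lambda>\<omega>. \<integral>\<sigma>. h \<sigma> \<partial>K \<omega>) \<in> borel_measurable \<mu>"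
    using measurable_from_subalg[OF sub_mu_P psi_meas[OF hm]] .
  have "(\<integral>\<^sup>+x. ennreal (h x) \<partial>\<mu>) = (\<integral>\<^sup>+x. ennreal (h x) \<partial>restr_to_subalg \<mu> N)"
    using nn_integral_subalgebra2[OF sub_mu_N hm'] by simp
  also have "\<dots> = (\<integral>\<^sup>+\<omega>. \<integral>\<^sup>+x. ennreal (h x) \<partial>K \<omega> \<partial>\<mu>)"
    unfolding bind_eq using nn_integral_bind[OF hm' K_measurable_mu] .
  also have "\<dots> = (\<integral>\<^sup>+\<omega>. ennreal (\<integral>\<sigma>. h \<sigma> \<partial>K \<omega>) \<partial>\<mu>)"
  proof (intro nn_integral_cong)
    fix \<omega> assume "\<omega> \<in> space \<mu>"
    then have \<omega>: "\<omega> \<in> space (Conf M)" using space_mu by simp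
    show "(\<integral>\<^sup>+x. ennreal (h x) \<partial>K \<omega>) = ennreal (\<integral>\<sigma>. h \<sigma> \<partial>K \<omega>)"
      using hK_int[OF hm hb \<omega>] h0 by (intro nn_integral_eq_integral AE_I2) (auto simp: K_space[OF \<omega>])
  qed
  finally have e: "(\<integral>\<^sup>+x. ennreal (h x) \<partial>\<mu>) = (\<integral>\<^sup>+\<omega>. ennreal (\<integral>\<sigma>. h \<sigma> \<partial>K \<omega>) \<partial>\<mu>)" .
  have i1: "integrable \<mu> h"
    using hmu hb by (rule int_bd)
  have i2: "integrable \<mu> (\<lambda>\<omega>. \<integral>\<sigma>. h \<sigma> \<partial>K \<omega>)"
    using psim psi_bd[OF hm hb] by (rule int_bd)
  have p0: "0 \<le> (\<integral>\<sigma>. h \<sigma> \<partial>K \<omega>)" if "\<omega> \<in> space (Conf M)" for \<omega>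
    using h0 by (intro Bochner_Integration.integral_nonneg) (auto simp: K_space[OF that])
  have "ennreal (\<integral>\<omega>. h \<omega> \<partial>\<mu>) = (\<integral>\<^sup>+x. ennreal (h x) \<partial>\<mu>)"
    using i1 h0 by (intro nn_integral_eq_integral[symmetric] AE_I2) (auto simp: space_mu)
  also have "\<dots> = (\<integral>\<^sup>+\<omega>. ennreal (\<integral>\<sigma>. h \<sigma> \<partial>K \<omega>) \<partial>\<mu>)" by (rule e)
  also have "\<dots> = ennreal (\<integral>\<omega>. (\<integral>\<sigma>. h \<sigma> \<partial>K \<omega>) \<partial>\<mu>)"
    using i2 p0 by (intro nn_integral_eq_integral AE_I2) (auto simp: space_mu)
  finally have "ennreal (\<integral>\<omega>. h \<omega> \<partial>\<mu>) = ennreal (\<integral>\<omega>. (\<integral>\<sigma>. h \<sigma> \<partial>K \<omega>) \<partial>\<mu>)" .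
  moreover have "0 \<le> (\<integral>\<omega>. h \<omega> \<partial>\<mu>)" using h0 by (intro Bochner_Integration.integral_nonneg) (auto simp: space_mu)
  moreover have "0 \<le> (\<integral>\<omega>. (\<integral>\<sigma>. h \<sigma> \<partial>K \<omega>) \<partial>\<mu>)" using p0 by (rule_tac Bochner_Integration.integral_nonneg) (auto simp: space_mu)
  ultimately show ?thesis by simp
qed

lemma ce_bd:
  fixes h :: "_ \<Rightarrow> real"
  assumes hm: "h \<in> borel_measurable N" and hb: "\<And>x. x \<in> space (Conf M) \<Longrightarrow> \<bar>h x\<bar> \<le> C"
  shows "(\<integral>\<omega>. (\<integral>\<sigma>. h \<sigma> \<partial>K \<omega>) \<partial>\<mu>) = (\<integral>\<omega>. h \<omega> \<partial>\<mu>)"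
proof -
  define g where "g x = h x + C" for x
  have gm: "g \<in> borel_measurable N" unfolding g_def using hm by measurable
  have gb: "\<bar>g x\<bar> \<le> 2 * C" if "x \<in> space (Conf M)" for x using hb[OF that] unfolding g_def by linarith
  have g0: "0 \<le> g x" if "x \<in> space (Conf M)" for x using hb[OF that] unfolding g_def by linarith
  have e: "(\<integral>\<omega>. (\<integral>\<sigma>. g \<sigma> \<partial>K \<omega>) \<partial>\<mu>) = (\<integral>\<omega>. g \<omega> \<partial>\<mu>)"
    by (rule ce_nonneg[OF gm gb g0])
  have psig: "(\<integral>\<sigma>. g \<sigma> \<partial>K \<omega>) = (\<integral>\<sigma>. h \<sigma> \<partial>K \<omega>) + C" if \<omega>: "\<omega> \<in> space (Conf M)" for \<omega>
  proof -
    interpret pK: prob_space "K \<omega>" using K_prob[OF \<omega>] .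
    show ?thesis unfolding g_def using hK_int[OF hm hb \<omega>] by (simp add: pK.prob_space)
  qed
  interpret pm: prob_space \<mu> by (rule pmu)
  have hmu: "h \<in> borel_measurable \<mu>" using measurable_from_subalg[OF sub_mu_N hm] .
  have psim: "(\<lambda>\<omega>. \<integral>\<sigma>. h \<sigma> \<partial>K \<omega>) \<in> borel_measurable \<mu>"
    using measurable_from_subalg[OF sub_mu_P psi_meas[OF hm]] .
  have i1: "integrable \<mu> h" using hmu hb by (rule int_bd)
  have i2: "integrable \<mu> (\<lambda>\<omega>. \<integral>\<sigma>. h \<sigma> \<partial>K \<omega>)" using psim psi_bd[OF hm hb] by (rule int_bd)
  have "(\<integral>\<omega>. (\<integral>\<sigma>. g \<sigma> \<partial>K \<omega>) \<partial>\<mu>) = (\<integral>\<omega>. (\<integral>\<sigma>. h \<sigma> \<partial>K \<omega>) + C \<partial>\<mu>)"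
    by (rule Bochner_Integration.integral_cong) (auto simp: psig space_mu)
  also have "\<dots> = (\<integral>\<omega>. (\<integral>\<sigma>. h \<sigma> \<partial>K \<omega>) \<partial>\<mu>) + C" using i2 by (simp add: pm.prob_space)
  finally have "(\<integral>\<omega>. (\<integral>\<sigma>. h \<sigma> \<partial>K \<omega>) \<partial>\<mu>) + C = (\<integral>\<omega>. h \<omega> \<partial>\<mu>) + C"
    using e i1 unfolding g_def by (simp add: pm.prob_space)
  then show ?thesis by simp
qed

lemma ce_f:
  fixes h f :: "_ \<Rightarrow> real"
  assumes hm: "h \<in> borel_measurable N" and hb: "\<And>x. x \<in> space (Conf M) \<Longrightarrow> \<bar>h x\<bar> \<le> C"
    and fm: "f \<in> borel_measurable P" and fb: "\<And>x. x \<in> space (Conf M) \<Longrightarrow> \<bar>f x\<bar> \<le> Cf"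
  shows "(\<integral>\<omega>. f \<omega> * (\<integral>\<sigma>. h \<sigma> \<partial>K \<omega>) \<partial>\<mu>) = (\<integral>\<omega>. f \<omega> * h \<omega> \<partial>\<mu>)"
proof -
  have fN: "f \<in> borel_measurable N" using measurable_from_subalg[OF subPN fm] .
  have fhm: "(\<lambda>x. f x * h x) \<in> borel_measurable N" using fN hm by measurable
  have fhb: "\<bar>f x * h x\<bar> \<le> \<bar>Cf\<bar> * \<bar>C\<bar>" if "x \<in> space (Conf M)" for x
  proof -
    have "\<bar>f x\<bar> \<le> \<bar>Cf\<bar>" "\<bar>h x\<bar> \<le> \<bar>C\<bar>" using fb[OF that] hb[OF that] by auto
    then show ?thesis by (simp add: abs_mult mult_mono)
  qed
  have eq: "(\<integral>\<sigma>. f \<sigma> * h \<sigma> \<partial>K \<omega>) = f \<omega> * (\<integral>\<sigma>. h \<sigma> \<partial>K \<omega>)" if \<omega>: "\<omega> \<in> space (Conf M)" for \<omega>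
  proof -
    interpret pK: prob_space "K \<omega>" using K_prob[OF \<omega>] .
    define S where "S = {y\<in>space P. f y = f \<omega>}"
    have [measurable]: "f \<in> borel_measurable P" by (rule fm)
    have SP: "S \<in> sets P" unfolding S_def by measurable
    have "\<omega> \<in> S" unfolding S_def using \<omega> by simp
    then have "measure (K \<omega>) S = 1" using K_ind[OF SP \<omega>] by simp
    then have ae: "AE y in K \<omega>. y \<in> S" by (rule pK.AE_prob_1)
    have "(\<integral>\<sigma>. f \<sigma> * h \<sigma> \<partial>K \<omega>) = (\<integral>\<sigma>. f \<omega> * h \<sigma> \<partial>K \<omega>)"
    proof (rule integral_cong_AE)
      show "(\<lambda>\<sigma>. f \<sigma> * h \<sigma>) \<in> borel_measurable (K \<omega>)" using hK_meas[OF fhm \<omega>] .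
      show "(\<lambda>\<sigma>. f \<omega> * h \<sigma>) \<in> borel_measurable (K \<omega>)" using hK_meas[OF hm \<omega>] by measurable
      show "AE x in K \<omega>. f x * h x = f \<omega> * h x" using ae by eventually_elim (auto simp: S_def)
    qed
    then show ?thesis by simp
  qed
  have "(\<integral>\<omega>. f \<omega> * (\<integral>\<sigma>. h \<sigma> \<partial>K \<omega>) \<partial>\<mu>) = (\<integral>\<omega>. (\<integral>\<sigma>. f \<sigma> * h \<sigma> \<partial>K \<omega>) \<partial>\<mu>)"
    by (rule Bochner_Integration.integral_cong) (auto simp: eq space_mu)
  also have "\<dots> = (\<integral>\<omega>. f \<omega> * h \<omega> \<partial>\<mu>)" by (rule ce_bd[OF fhm fhb])
  finally show ?thesis .
qed

end


section \<open>Tail triviality\<close>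

lemma kern_of:
  assumes pos: "POS M \<gamma>" and g: "Gibbs M \<gamma> \<mu>" and tb: "time_box L"
  shows "kern M L (\<gamma> L) \<mu>"
  using assms unfolding POS_def Gibbs_def by (auto intro!: kern.intro)

lemma unif_density:
  assumes "prob_space \<mu>" "B \<in> sets \<mu>" "0 < measure \<mu> B"
  shows "uniform_measure \<mu> B = density \<mu> (\<lambda>x. ennreal (indicator B x / measure \<mu> B))"
proof -
  have "emeasure \<mu> B = ennreal (measure \<mu> B)" using prob_emeasure[OF assms(1)] .
  then have "(\<lambda>x. indicator B x / emeasure \<mu> B) = (\<lambda>x. ennreal (indicator B x / measure \<mu> B))"
  proof (intro ext)
    fix x
    have "1 / ennreal (measure \<mu> B) = ennreal (1 / measure \<mu> B)"
      using assms(3) by (metis divide_ennreal ennreal_1 zero_le_one)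
    then show "indicator B x / emeasure \<mu> B = ennreal (indicator B x / measure \<mu> B)"
      using \<open>emeasure \<mu> B = ennreal (measure \<mu> B)\<close> by (auto simp: indicator_def)
  qed
  then show ?thesis unfolding uniform_measure_def by simp
qed

lemma unif_gibbs:
  assumes pos: "POS M \<gamma>" and g: "Gibbs M \<gamma> \<mu>" and tb: "\<And>n. time_box (Lam n)"
    and inc: "incseq Lam" and cover: "(\<Union>n. Lam n) = UNIV"
    and B: "\<And>n. B \<in> sets (Fsub M (past (Lam n) \<union> outer (Lam n)))" and Bp: "0 < measure \<mu> B"
  shows "Gibbs M \<gamma> (uniform_measure \<mu> B)"
proof -
  have pmu: "prob_space \<mu>" and smu: "sets \<mu> = sets (Conf M)" using g unfolding Gibbs_def by auto
  interpret pm: prob_space \<mu> by (rule pmu)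
  have BM: "B \<in> sets \<mu>" using B[of 0] sets_Fsub_Conf smu by auto
  define p where "p = measure \<mu> B"
  have ud: "uniform_measure \<mu> B = density \<mu> (\<lambda>x. ennreal (indicator B x / p))"
    unfolding p_def by (rule unif_density[OF pmu BM Bp])
  have "prob_space (uniform_measure \<mu> B)"
    using Bp BM by (intro prob_space_uniform_measure) (auto simp: pm.emeasure_eq_measure)
  moreover have "sets (uniform_measure \<mu> B) = sets (Conf M)" using smu by simp
  moreover have "(\<integral>\<omega>. measure (\<gamma> L \<omega>) A \<partial>uniform_measure \<mu> B) = measure (uniform_measure \<mu> B) A"
    if L: "time_box L" and A: "A \<in> sets (Fsub M (- future L))" for L A
  proof -
    interpret k: kern M L "\<gamma> L" \<mu> by (rule kern_of[OF pos g L])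
    obtain n where n: "L \<subseteq> Lam n" using finite_in_seq[OF _ inc cover] L unfolding time_box_def by blast
    have BP: "B \<in> sets k.P" using B[of n] sets_Fsub_mono[OF po_decr[OF tb n]] by auto
    have AM: "A \<in> sets \<mu>" using A sets_Fsub_Conf smu by auto
    have fm: "indicator B \<in> borel_measurable k.P" using BP by simp
    have hm: "indicator A \<in> borel_measurable k.N" using A by simp
    have psi: "measure (\<gamma> L \<omega>) (A \<inter> space (\<gamma> L \<omega>)) = measure (\<gamma> L \<omega>) A" if "\<omega> \<in> space (Conf M)" for \<omega>
      using A k.K_sets[OF that] k.K_space[OF that] sets.sets_into_space[of A "\<gamma> L \<omega>"]
      by (simp add: Int_absorb2)
    have gm: "(\<lambda>\<omega>. measure (\<gamma> L \<omega>) A) \<in> borel_measurable \<mu>"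
      using measurable_from_subalg[OF k.sub_mu_P k.K_meas[OF A]] .
    have "(\<integral>\<omega>. measure (\<gamma> L \<omega>) A \<partial>uniform_measure \<mu> B)
        = (\<integral>\<omega>. (indicator B \<omega> / p) * measure (\<gamma> L \<omega>) A \<partial>\<mu>)"
      unfolding ud using BM gm by (subst integral_density) (auto simp: p_def)
    also have "\<dots> = (\<integral>\<omega>. indicator B \<omega> * (\<integral>\<sigma>. indicator A \<sigma> \<partial>\<gamma> L \<omega>) \<partial>\<mu>) / p"
      by (subst integral_divide_zero[symmetric], rule Bochner_Integration.integral_cong)
         (auto simp: psi k.space_mu)
    also have "\<dots> = (\<integral>\<omega>. indicator B \<omega> * indicator A \<omega> \<partial>\<mu>) / p"
      using k.ce_f[OF hm _ fm, of 1 1] by (simp add: indicator_def)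
    also have "\<dots> = measure \<mu> (B \<inter> A) / p"
      using BM AM by (simp add: indicator_inter_arith[symmetric] Int_absorb2 sets.Int)
    also have "\<dots> = measure (uniform_measure \<mu> B) A"
      using Bp BM AM by (subst measure_uniform_measure) (auto simp: p_def pm.emeasure_eq_measure)
    finally show ?thesis .
  qed
  ultimately show ?thesis unfolding Gibbs_def by auto
qed


lemma tail_triv:
  assumes pos: "POS M \<gamma>" and ext: "extremal_Gibbs M \<gamma> \<mu>" and tb: "\<And>n. time_box (Lam n)"
    and inc: "incseq Lam" and cover: "(\<Union>n. Lam n) = UNIV"
    and A: "\<And>n. A \<in> sets (Fsub M (past (Lam n) \<union> outer (Lam n)))"
  shows "measure \<mu> A = 0 \<or> measure \<mu> A = 1"
proof (rule ccontr)
  assume c: "\<not> (measure \<mu> A = 0 \<or> measure \<mu> A = 1)"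
  have g: "Gibbs M \<gamma> \<mu>" using ext unfolding extremal_Gibbs_def by auto
  have pmu: "prob_space \<mu>" and smu: "sets \<mu> = sets (Conf M)" using g unfolding Gibbs_def by auto
  interpret pm: prob_space \<mu> by (rule pmu)
  have spmu: "space \<mu> = space (Conf M)" using sets_eq_imp_space_eq[OF smu] .
  have AM: "A \<in> sets \<mu>" using A[of 0] sets_Fsub_Conf smu by auto
  define p where "p = measure \<mu> A"
  have "p \<le> 1" "0 \<le> p" "p \<noteq> 0" "p \<noteq> 1" using c pm.prob_le_1[of A] measure_nonneg[of \<mu> A] unfolding p_def by auto
  then have p: "0 < p" "p < 1" by auto
  define Ac where "Ac = space (Conf M) - A"
  have Ac: "Ac \<in> sets (Fsub M (past (Lam n) \<union> outer (Lam n)))" for n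
    using sets.compl_sets[OF A[of n]] unfolding Ac_def by simp
  have AcM: "Ac \<in> sets \<mu>" using Ac[of 0] sets_Fsub_Conf smu by auto
  have pAc: "measure \<mu> Ac = 1 - p" unfolding Ac_def p_def spmu[symmetric] using AM by (rule pm.prob_compl)
  have g1: "Gibbs M \<gamma> (uniform_measure \<mu> A)"
    using unif_gibbs[OF pos g tb inc cover A] p unfolding p_def by auto
  have g2: "Gibbs M \<gamma> (uniform_measure \<mu> Ac)"
    using unif_gibbs[OF pos g tb inc cover Ac] p pAc by auto
  have dec: "measure \<mu> C = p * measure (uniform_measure \<mu> A) C + (1 - p) * measure (uniform_measure \<mu> Ac) C"
    if C: "C \<in> sets (Conf M)" for C
  proof -
    have CM: "C \<in> sets \<mu>" using C smu by simp
    have m1: "measure (uniform_measure \<mu> A) C = measure \<mu> (A \<inter> C) / p"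
      using p AM CM by (subst measure_uniform_measure) (auto simp: p_def pm.emeasure_eq_measure)
    have m2: "measure (uniform_measure \<mu> Ac) C = measure \<mu> (Ac \<inter> C) / (1 - p)"
      using p AcM CM pAc by (subst measure_uniform_measure) (auto simp: pm.emeasure_eq_measure)
    have "C = (A \<inter> C) \<union> (Ac \<inter> C)" using sets.sets_into_space[OF CM] spmu unfolding Ac_def by auto
    then have "measure \<mu> C = measure \<mu> ((A \<inter> C) \<union> (Ac \<inter> C))" by simp
    also have "\<dots> = measure \<mu> (A \<inter> C) + measure \<mu> (Ac \<inter> C)"
      using AM AcM CM by (intro pm.finite_measure_Union) (auto simp: Ac_def)
    finally show ?thesis using m1 m2 p by simp
  qed
  have "measure (uniform_measure \<mu> A) A = measure \<mu> A"
    using ext g1 g2 p dec AM smu unfolding extremal_Gibbs_def by blast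
  moreover have "measure (uniform_measure \<mu> A) A = 1"
    using p AM by (subst measure_uniform_measure) (auto simp: p_def pm.emeasure_eq_measure)
  ultimately show False using p unfolding p_def by simp
qed


lemma part1:
  fixes h :: "('s::order \<Rightarrow> 'e) \<Rightarrow> real"
  assumes pos: "POS M \<gamma>" and ext: "extremal_Gibbs M \<gamma> \<mu>" and tb: "\<And>n. time_box (Lam n)"
    and inc: "incseq Lam" and cover: "(\<Union>n. Lam n) = UNIV"
    and hl: "local_fun M h" and hb: "bounded_fun M h"
  shows "AE \<omega> in \<mu>. (\<lambda>n. \<integral>\<sigma>. h \<sigma> \<partial>(\<gamma> (Lam n) \<omega>)) \<longlonglongrightarrow> (\<integral>\<sigma>. h \<sigma> \<partial>\<mu>)"
proof -
  have g: "Gibbs M \<gamma> \<mu>" using ext unfolding extremal_Gibbs_def by auto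
  have pmu: "prob_space \<mu>" and smu: "sets \<mu> = sets (Conf M)" using g unfolding Gibbs_def by auto
  have spmu: "space \<mu> = space (Conf M)" using sets_eq_imp_space_eq[OF smu] .
  obtain D where D: "finite D" "h \<in> borel_measurable (Fsub M D)" using hl unfolding local_fun_def by auto
  obtain B where hB: "\<And>\<omega>. \<omega> \<in> space (Conf M) \<Longrightarrow> \<bar>h \<omega>\<bar> \<le> B" using hb unfolding bounded_fun_def by auto
  obtain n0 where n0: "D \<subseteq> Lam n0" using finite_in_seq[OF D(1) inc cover] by auto
  define L' where "L' n = Lam (n + n0)" for n
  define F where "F n = Fsub M (past (L' n) \<union> outer (L' n))" for n
  define X where "X n \<omega> = (\<integral>\<sigma>. h \<sigma> \<partial>\<gamma> (L' n) \<omega>)" for n \<omega>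
  have tbL: "time_box (L' n)" for n unfolding L'_def by (rule tb)
  have L'mono: "L' n \<subseteq> L' m" if "n \<le> m" for n m using inc that unfolding L'_def incseq_def by auto
  have DL: "D \<subseteq> L' n" for n using n0 inc unfolding L'_def incseq_def by (meson le_add2 order_trans)
  have hN: "h \<in> borel_measurable (Fsub M (- future (L' n)))" for n
    using meas_Fsub_mono[OF order_trans[OF DL fut_sub[OF order_refl]] D(2)] .
  interpret k: kern M "L' n" "\<gamma> (L' n)" \<mu> for n by (rule kern_of[OF pos g tbL])
  have ax: "bmart_axioms \<mu> F X h B"
  proof (rule bmart_axioms.intro)
    show "subalgebra \<mu> (F n)" for n unfolding F_def by (rule subalg_Fsub[OF smu])
    show "sets (F m) \<subseteq> sets (F n)" if "n \<le> m" for n m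
      unfolding F_def by (rule sets_Fsub_mono[OF po_decr[OF tbL L'mono[OF that]]])
    show "X n \<in> borel_measurable (F n)" for n unfolding X_def F_def by (rule k.psi_meas[OF hN])
    show "\<bar>X n \<omega>\<bar> \<le> B" if "\<omega> \<in> space \<mu>" for n \<omega>
      unfolding X_def using k.psi_bd[OF hN hB] that spmu by auto
    show "h \<in> borel_measurable \<mu>" using measurable_from_subalg[OF subalg_Fsub[OF smu] D(2)] .
    show "\<bar>h \<omega>\<bar> \<le> B" if "\<omega> \<in> space \<mu>" for \<omega> using hB that spmu by auto
    show "(\<integral>\<omega>. f \<omega> * X n \<omega> \<partial>\<mu>) = (\<integral>\<omega>. f \<omega> * h \<omega> \<partial>\<mu>)"
      if "f \<in> borel_measurable (F n)" "\<And>\<omega>. \<omega> \<in> space \<mu> \<Longrightarrow> \<bar>f \<omega>\<bar> \<le> C" for n f C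
      unfolding X_def using k.ce_f[OF hN hB, of f n C] that spmu unfolding F_def by auto
    show "measure \<mu> A = 0 \<or> measure \<mu> A = 1" if "\<And>n. A \<in> sets (F n)" for A
    proof (rule tail_triv[OF pos ext tb inc cover])
      fix k
      have "Lam k \<subseteq> L' k" using inc unfolding L'_def incseq_def by auto
      then show "A \<in> sets (Fsub M (past (Lam k) \<union> outer (Lam k)))"
        using that[of k] sets_Fsub_mono[OF po_decr[OF tbL]] unfolding F_def by blast
    qed
  qed
  interpret bm: bmart \<mu> F X h B by (rule bmart.intro[OF pmu ax])
  show ?thesis using bm.conv
  proof eventually_elim
    case (elim \<omega>)
    then have "(\<lambda>n. (\<lambda>n. \<integral>\<sigma>. h \<sigma> \<partial>(\<gamma> (Lam n) \<omega>)) (n + n0)) \<longlonglongrightarrow> (\<integral>\<sigma>. h \<sigma> \<partial>\<mu>)"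
      unfolding X_def L'_def by simp
    then show ?case by (rule LIMSEQ_offset)
  qed
qed



lemma local_agree:
  fixes h :: "_ \<Rightarrow> real"
  assumes h: "h \<in> borel_measurable (Fsub M D)" and s: "\<sigma> \<in> space (Conf M)" "\<tau> \<in> space (Conf M)"
    and ag: "\<And>x. x \<in> D \<Longrightarrow> \<sigma> x = \<tau> x"
  shows "h \<sigma> = h \<tau>"
proof -
  have sat: "\<sigma> \<in> G \<longleftrightarrow> \<tau> \<in> G" if "G \<in> sets (Fsub M D)" for G
    using that unfolding sets_Fsub
  proof induction
    case (Basic a)
    then obtain x A where "x \<in> D" "a = (\<lambda>\<omega>. \<omega> x) -` A \<inter> space (Conf M)" unfolding gens_def by auto
    then show ?case using ag s by auto
  next
    case Empty then show ?case by simp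
  next
    case (Compl a) then show ?case using s by auto
  next
    case (Union a) then show ?case by auto
  qed
  have [measurable]: "h \<in> borel_measurable (Fsub M D)" by (rule h)
  have "{\<rho>\<in>space (Fsub M D). h \<rho> = h \<sigma>} \<in> sets (Fsub M D)" by measurable
  then have "\<sigma> \<in> {\<rho>\<in>space (Fsub M D). h \<rho> = h \<sigma>} \<longleftrightarrow> \<tau> \<in> {\<rho>\<in>space (Fsub M D). h \<rho> = h \<sigma>}"
    by (rule sat)
  then show ?thesis using s by simp
qed

lemma cells:
  fixes m :: "'e metric"
  assumes sp: "mspace m = space M" and cp: "compact_space (mtopology_of m)"
    and sM: "sets M = sigma_sets (space M) {U. openin (mtopology_of m) U}" and r: "0 < r"
  obtains n :: nat and cell cen where "\<forall>j<n. cen j \<in> space M \<and> cell j \<in> sets M"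
     "\<forall>e\<in>space M. \<exists>j<n. e \<in> cell j" "\<forall>i<n. \<forall>j<n. i \<noteq> j \<longrightarrow> cell i \<inter> cell j = {}"
     "\<forall>j<n. \<forall>e\<in>cell j. e \<in> space M \<and> mdist m e (cen j) < r"
proof -
  interpret MS: Metric_space "mspace m" "mdist m" by simp
  have mt: "mtopology_of m = MS.mtopology" unfolding mtopology_of_def by simp
  have "compactin MS.mtopology (mspace m)"
    using cp unfolding mt compact_space_def by simp
  then have tb: "MS.mtotally_bounded (mspace m)"
    by (rule MS.compactin_imp_mtotally_bounded)
  obtain K where K: "finite K" "K \<subseteq> mspace m" "mspace m \<subseteq> (\<Union>x\<in>K. MS.mball x r)"
    using tb[unfolded MS.mtotally_bounded_def, rule_format, OF r] by (elim exE conjE)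
  obtain xs where xs: "set xs = K" using finite_list[OF K(1)] by blast
  define n where "n = length xs"
  define cen where "cen j = xs ! j" for j
  define cell where "cell j = MS.mball (xs ! j) r - (\<Union>i<j. MS.mball (xs ! i) r)" for j
  have openM: "U \<in> sets M" if "openin (mtopology_of m) U" for U
    using that unfolding sM by (intro sigma_sets.Basic) simp
  have ballM: "MS.mball c r \<in> sets M" for c using openM[of "MS.mball c r"] unfolding mt by simp
  have f1: "\<forall>j<n. cen j \<in> space M \<and> cell j \<in> sets M"
  proof (intro allI impI conjI)
    fix j assume "j < n"
    then show "cen j \<in> space M" using K(2) xs sp unfolding cen_def n_def by auto
    show "cell j \<in> sets M" unfolding cell_def using ballM by (intro sets.Diff sets.finite_UN) auto
  qed
  have f2: "\<forall>e\<in>space M. \<exists>j<n. e \<in> cell j"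
  proof
    fix e assume e: "e \<in> space M"
    then obtain c where c: "c \<in> K" "e \<in> MS.mball c r" using K(3) sp by auto
    then obtain j where j: "j < n" "xs ! j = c" using xs unfolding n_def by (metis in_set_conv_nth)
    define j0 where "j0 = (LEAST j. j < n \<and> e \<in> MS.mball (xs ! j) r)"
    have P: "j0 < n \<and> e \<in> MS.mball (xs ! j0) r" unfolding j0_def
      by (rule LeastI[of _ j]) (use j c in auto)
    have "\<not> (i < n \<and> e \<in> MS.mball (xs ! i) r)" if "i < j0" for i
      using not_less_Least[OF that[unfolded j0_def]] .
    then have "e \<in> cell j0" unfolding cell_def using P by auto
    then show "\<exists>j<n. e \<in> cell j" using P by auto
  qed
  have f3: "\<forall>i<n. \<forall>j<n. i \<noteq> j \<longrightarrow> cell i \<inter> cell j = {}"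
  proof (intro allI impI)
    fix i j assume "i < n" "j < n" "i \<noteq> j"
    then have "i < j \<or> j < i" by auto
    then show "cell i \<inter> cell j = {}" unfolding cell_def by auto
  qed
  have f4: "\<forall>j<n. \<forall>e\<in>cell j. e \<in> space M \<and> mdist m e (cen j) < r"
    unfolding cell_def cen_def by (auto simp: MS.commute sp[symmetric])
  show thesis by (rule that[OF f1 f2 f3 f4])
qed


lemma space_Conf: "space (Conf M) = (\<Pi>\<^sub>E x\<in>UNIV. space M)"
  unfolding Conf_def by (simp add: space_PiM)

lemma unif_cont:
  fixes m :: "'e metric" and h :: "('s \<Rightarrow> 'e) \<Rightarrow> real"
  assumes sp: "mspace m = space M" and cp: "compact_space (mtopology_of m)"
    and hm: "h \<in> borel_measurable (Fsub M D)" and fD: "finite D"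
    and hc: "continuous_map (product_topology (\<lambda>_::'s. mtopology_of m) UNIV) euclideanreal h"
    and e: "0 < \<epsilon>"
  shows "\<exists>\<delta>>0. \<forall>\<sigma>\<in>space (Conf M). \<forall>\<tau>\<in>space (Conf M).
           (\<forall>x\<in>D. mdist m (\<sigma> x) (\<tau> x) < \<delta>) \<longrightarrow> \<bar>h \<sigma> - h \<tau>\<bar> < \<epsilon>"
proof -
  interpret MS: Metric_space "mspace m" "mdist m" by simp
  have mt: "mtopology_of m = MS.mtopology" unfolding mtopology_of_def by simp
  define T where "T = product_topology (\<lambda>_::'s. mtopology_of m) UNIV"
  have tsT: "topspace T = space (Conf M)" unfolding T_def space_Conf by (simp add: sp)
  have inM: "\<sigma> x \<in> mspace m" if "\<sigma> \<in> space (Conf M)" for \<sigma> x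
    using that sp unfolding space_Conf by auto
  have loc: "\<exists>\<rho>>0. \<forall>\<sigma>\<in>space (Conf M). (\<forall>x\<in>D. mdist m (\<omega>0 x) (\<sigma> x) < \<rho>) \<longrightarrow> \<bar>h \<sigma> - h \<omega>0\<bar> < \<epsilon>/2"
    if \<omega>0: "\<omega>0 \<in> space (Conf M)" for \<omega>0
  proof -
    define V where "V = {\<sigma> \<in> topspace T. h \<sigma> \<in> ball (h \<omega>0) (\<epsilon>/2)}"
    have oV: "openin T V" unfolding V_def T_def
      by (rule openin_continuous_map_preimage[OF hc]) simp
    have "\<omega>0 \<in> V" unfolding V_def using \<omega>0 tsT e by simp
    then obtain U where U: "\<forall>i\<in>UNIV. openin (mtopology_of m) (U i)" "\<omega>0 \<in> Pi\<^sub>E UNIV U" "Pi\<^sub>E UNIV U \<subseteq> V"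
      using oV unfolding T_def openin_product_topology_alt by blast
    have "\<forall>x\<in>D. \<exists>r>0. MS.mball (\<omega>0 x) r \<subseteq> U x"
    proof
      fix x assume "x \<in> D"
      have "\<omega>0 x \<in> U x" using U(2) by auto
      moreover have "openin MS.mtopology (U x)" using U(1) mt by simp
      ultimately show "\<exists>r>0. MS.mball (\<omega>0 x) r \<subseteq> U x" unfolding MS.openin_mtopology by blast
    qed
    then obtain r where r: "\<forall>x\<in>D. 0 < r x \<and> MS.mball (\<omega>0 x) (r x) \<subseteq> U x" by metis
    define \<rho> where "\<rho> = Min (insert 1 (r ` D))"
    have \<rho>0: "0 < \<rho>" unfolding \<rho>_def using fD r by (subst Min_gr_iff) auto
    have \<rho>r: "\<rho> \<le> r x" if "x \<in> D" for x unfolding \<rho>_def using fD that by (intro Min_le) auto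
    show ?thesis
    proof (intro exI conjI ballI impI)
      show "0 < \<rho>" by (rule \<rho>0)
      fix \<sigma> assume \<sigma>: "\<sigma> \<in> space (Conf M)" and d: "\<forall>x\<in>D. mdist m (\<omega>0 x) (\<sigma> x) < \<rho>"
      define \<sigma>' where "\<sigma>' x = (if x \<in> D then \<sigma> x else \<omega>0 x)" for x
      have "\<sigma>' \<in> Pi\<^sub>E UNIV U"
      proof -
        have "\<sigma>' x \<in> U x" for x
        proof (cases "x \<in> D")
          case True
          then have "\<sigma> x \<in> MS.mball (\<omega>0 x) (r x)"
            using inM[OF \<sigma>] inM[OF \<omega>0] d \<rho>r[OF True] by fastforce
          moreover have "MS.mball (\<omega>0 x) (r x) \<subseteq> U x" using r True by auto
          ultimately show ?thesis using True unfolding \<sigma>'_def by auto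
        next
          case False then show ?thesis using U(2) unfolding \<sigma>'_def by auto
        qed
        then show ?thesis by auto
      qed
      then have "\<sigma>' \<in> V" using U(3) by auto
      then have "\<bar>h \<sigma>' - h \<omega>0\<bar> < \<epsilon>/2" unfolding V_def by (simp add: dist_real_def abs_minus_commute)
      moreover have "\<sigma>' \<in> space (Conf M)" using \<sigma> \<omega>0 unfolding \<sigma>'_def space_Conf by (auto simp: PiE_iff)
      moreover have "h \<sigma>' = h \<sigma>" using local_agree[OF hm _ \<sigma>, of \<sigma>'] \<open>\<sigma>' \<in> space (Conf M)\<close> unfolding \<sigma>'_def by auto
      ultimately show "\<bar>h \<sigma> - h \<omega>0\<bar> < \<epsilon>/2" by simp
    qed
  qed
  then obtain R where R: "\<forall>\<omega>0\<in>space (Conf M). 0 < R \<omega>0 \<and> (\<forall>\<sigma>\<in>space (Conf M). (\<forall>x\<in>D. mdist m (\<omega>0 x) (\<sigma> x) < R \<omega>0) \<longrightarrow> \<bar>h \<sigma> - h \<omega>0\<bar> < \<epsilon>/2)"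
    by metis
  have Rpos: "0 < R q" if "q \<in> space (Conf M)" for q using R that by blast
  have Rh: "\<bar>h \<sigma> - h q\<bar> < \<epsilon>/2" if "q \<in> space (Conf M)" "\<sigma> \<in> space (Conf M)"
      "\<forall>x\<in>D. mdist m (q x) (\<sigma> x) < R q" for q \<sigma>
    using R that by blast
  define Ob where "Ob \<omega>0 = {\<sigma>\<in>topspace T. \<forall>x\<in>D. mdist m (\<omega>0 x) (\<sigma> x) < R \<omega>0 / 2}" for \<omega>0
  have oO: "openin T (Ob \<omega>0)" if \<omega>0: "\<omega>0 \<in> space (Conf M)" for \<omega>0
    unfolding T_def openin_product_topology_alt
  proof
    fix \<sigma> assume \<sigma>: "\<sigma> \<in> Ob \<omega>0"
    define U where "U i = (if i \<in> D then MS.mball (\<omega>0 i) (R \<omega>0 / 2) else mspace m)" for i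
    show "\<exists>U. finite {i \<in> UNIV. U i \<noteq> topspace (mtopology_of m)} \<and> (\<forall>i\<in>UNIV. openin (mtopology_of m) (U i)) \<and>
              \<sigma> \<in> Pi\<^sub>E UNIV U \<and> Pi\<^sub>E UNIV U \<subseteq> Ob \<omega>0"
    proof (intro exI conjI)
      show "finite {i \<in> UNIV. U i \<noteq> topspace (mtopology_of m)}"
        using fD by (rule finite_subset[rotated]) (auto simp: U_def)
      show "\<forall>i\<in>UNIV. openin (mtopology_of m) (U i)" unfolding U_def mt by auto
      have \<sigma>s: "\<sigma> \<in> space (Conf M)" using \<sigma> tsT unfolding Ob_def by auto
      show "\<sigma> \<in> Pi\<^sub>E UNIV U" using \<sigma> inM[OF \<sigma>s] inM[OF \<omega>0] unfolding Ob_def U_def by auto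
      show "Pi\<^sub>E UNIV U \<subseteq> Ob \<omega>0"
      proof
        fix \<tau> assume \<tau>: "\<tau> \<in> Pi\<^sub>E UNIV U"
        have "\<tau> i \<in> mspace m" for i using \<tau> unfolding U_def by (auto split: if_splits)
        then have "\<tau> \<in> topspace T" unfolding T_def by auto
        moreover have "\<forall>x\<in>D. mdist m (\<omega>0 x) (\<tau> x) < R \<omega>0 / 2"
        proof
          fix x assume "x \<in> D"
          have "\<tau> x \<in> U x" using \<tau> by (simp add: PiE_iff)
          then have "\<tau> x \<in> MS.mball (\<omega>0 x) (R \<omega>0 / 2)" using \<open>x \<in> D\<close> by (simp only: U_def if_True)
          then show "mdist m (\<omega>0 x) (\<tau> x) < R \<omega>0 / 2" using MS.in_mball by blast
        qed
        ultimately show "\<tau> \<in> Ob \<omega>0" unfolding Ob_def by auto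
      qed
    qed
  qed
  have cT: "compact_space T" unfolding T_def using cp by (simp add: compact_space_product_topology)
  have cov: "topspace T \<subseteq> \<Union>(Ob ` space (Conf M))"
  proof
    fix \<sigma> assume "\<sigma> \<in> topspace T"
    then have \<sigma>: "\<sigma> \<in> space (Conf M)" using tsT by simp
    have "\<sigma> \<in> Ob \<sigma>" unfolding Ob_def using \<sigma> tsT Rpos[OF \<sigma>] inM[OF \<sigma>] by simp
    then show "\<sigma> \<in> \<Union>(Ob ` space (Conf M))" using \<sigma> by auto
  qed
  have conj: "(\<forall>U\<in>Ob ` space (Conf M). openin T U) \<and> topspace T \<subseteq> \<Union>(Ob ` space (Conf M))"
    using oO cov by blast
  have "\<exists>F. finite F \<and> F \<subseteq> Ob ` space (Conf M) \<and> topspace T \<subseteq> \<Union>F"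
    by (rule cT[unfolded compact_space_alt, rule_format, OF conj])
  then obtain F where F: "finite F" "F \<subseteq> Ob ` space (Conf M)" "topspace T \<subseteq> \<Union>F"
    by blast
  then obtain Q where Q: "Q \<subseteq> space (Conf M)" "finite Q" "F = Ob ` Q" by (meson finite_subset_image)
    define \<delta> where "\<delta> = Min (insert 1 ((\<lambda>q. R q / 2) ` Q))"
    have \<delta>0: "0 < \<delta>" unfolding \<delta>_def
    proof (subst Min_gr_iff)
      show "finite (insert 1 ((\<lambda>q. R q / 2) ` Q))" using Q(2) by simp
      show "insert 1 ((\<lambda>q. R q / 2) ` Q) \<noteq> {}" by simp
      show "\<forall>a\<in>insert 1 ((\<lambda>q. R q / 2) ` Q). 0 < a" using Rpos Q(1) by auto
    qed
    have \<delta>q: "\<delta> \<le> R q / 2" if "q \<in> Q" for q unfolding \<delta>_def using Q(2) that by (intro Min_le) auto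
    show ?thesis
    proof (intro exI conjI ballI impI)
      show "0 < \<delta>" by (rule \<delta>0)
      fix \<sigma> \<tau> assume \<sigma>: "\<sigma> \<in> space (Conf M)" and \<tau>: "\<tau> \<in> space (Conf M)"
        and d: "\<forall>x\<in>D. mdist m (\<sigma> x) (\<tau> x) < \<delta>"
      have "\<sigma> \<in> topspace T" using \<sigma> tsT by simp
      then have "\<sigma> \<in> \<Union>(Ob ` Q)" using F(3) unfolding Q(3) by blast
      then obtain q where q: "q \<in> Q" "\<sigma> \<in> Ob q" by (rule UN_E)
      have qs: "q \<in> space (Conf M)" using q(1) Q(1) by (rule subsetD[rotated])
      have d1: "\<forall>x\<in>D. mdist m (q x) (\<sigma> x) < R q" using q(2) Rpos[OF qs] unfolding Ob_def by auto
      have d2: "\<forall>x\<in>D. mdist m (q x) (\<tau> x) < R q"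
      proof
        fix x assume x: "x \<in> D"
        have "mdist m (q x) (\<tau> x) \<le> mdist m (q x) (\<sigma> x) + mdist m (\<sigma> x) (\<tau> x)"
          using inM[OF qs] inM[OF \<sigma>] inM[OF \<tau>] by (rule mdist_triangle)
        also have "\<dots> < R q / 2 + \<delta>" using q(2) x d unfolding Ob_def by (intro add_strict_mono) auto
        also have "\<dots> \<le> R q" using \<delta>q[OF q(1)] by simp
        finally show "mdist m (q x) (\<tau> x) < R q" .
      qed
      have "\<bar>h \<sigma> - h q\<bar> < \<epsilon>/2" by (rule Rh[OF qs \<sigma> d1])
      moreover have "\<bar>h \<tau> - h q\<bar> < \<epsilon>/2" by (rule Rh[OF qs \<tau> d2])
      ultimately show "\<bar>h \<sigma> - h \<tau>\<bar> < \<epsilon>" by linarith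
    qed
qed


definition cellprop :: "'e measure \<Rightarrow> 'e metric \<Rightarrow> real \<Rightarrow> nat \<Rightarrow> (nat \<Rightarrow> 'e set) \<Rightarrow> (nat \<Rightarrow> 'e) \<Rightarrow> bool" where
  "cellprop M m r n cell cen \<longleftrightarrow> (\<forall>j<n. cen j \<in> space M \<and> cell j \<in> sets M) \<and>
     (\<forall>e\<in>space M. \<exists>j<n. e \<in> cell j) \<and> (\<forall>i<n. \<forall>j<n. i \<noteq> j \<longrightarrow> cell i \<inter> cell j = {}) \<and>
     (\<forall>j<n. \<forall>e\<in>cell j. e \<in> space M \<and> mdist m e (cen j) < r)"

lemma cells_ex:
  fixes m :: "'e metric"
  assumes sp: "mspace m = space M" and cp: "compact_space (mtopology_of m)"
    and sM: "sets M = sigma_sets (space M) {U. openin (mtopology_of m) U}" and r: "0 < r"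
  shows "\<exists>n cell cen. cellprop M m r n cell cen"
proof -
  obtain n :: nat and cell cen where c: "\<forall>j<n. cen j \<in> space M \<and> cell j \<in> sets M"
     "\<forall>e\<in>space M. \<exists>j<n. e \<in> cell j" "\<forall>i<n. \<forall>j<n. i \<noteq> j \<longrightarrow> cell i \<inter> cell j = {}"
     "\<forall>j<n. \<forall>e\<in>cell j. e \<in> space M \<and> mdist m e (cen j) < r"
    by (rule cells[OF sp cp sM r])
  have "cellprop M m r n cell cen" unfolding cellprop_def using c by simp
  then show ?thesis by blast
qed

lemma approx_int:
  fixes f g :: "_ \<Rightarrow> real"
  assumes "prob_space \<nu>" "f \<in> borel_measurable \<nu>" "g \<in> borel_measurable \<nu>"
    "\<And>x. x \<in> space \<nu> \<Longrightarrow> \<bar>f x - g x\<bar> \<le> c" "\<And>x. x \<in> space \<nu> \<Longrightarrow> \<bar>g x\<bar> \<le> B"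
  shows "\<bar>(\<integral>x. f x \<partial>\<nu>) - (\<integral>x. g x \<partial>\<nu>)\<bar> \<le> c"
proof -
  interpret prob_space \<nu> by fact
  have fb: "\<bar>f x\<bar> \<le> B + c" if "x \<in> space \<nu>" for x using assms(4,5)[OF that] by linarith
  have ig: "integrable \<nu> g" using assms(3,5) by (intro integrable_const_bound[where B=B] AE_I2) auto
  have iF: "integrable \<nu> f" using assms(2) fb by (intro integrable_const_bound[where B="B+c"] AE_I2) auto
  have i: "integrable \<nu> (\<lambda>x. f x - g x)" using ig iF by simp
  have "(\<integral>x. f x - g x \<partial>\<nu>) \<le> c" using assms(4) by (intro integral_le_const[OF i] AE_I2) (auto simp: abs_le_iff)
  moreover have "-c \<le> (\<integral>x. f x - g x \<partial>\<nu>)"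
  proof (intro integral_ge_const[OF i] AE_I2)
    fix x assume "x \<in> space \<nu>" then show "-c \<le> f x - g x" using assms(4) by (smt (verit))
  qed
  ultimately show ?thesis using ig iF by simp
qed


lemma tri:
  fixes e :: real
  assumes a: "\<bar>x - g1\<bar> \<le> e/4" and b: "g1 = S" and c: "\<bar>S - A\<bar> < e/4" and d: "\<bar>y - g2\<bar> \<le> e/4"
    and f: "g2 = A" and "0 < e"
  shows "\<bar>x - y\<bar> < e"
proof -
  have 1: "x - g1 \<le> e/4" "-(x - g1) \<le> e/4" using a by (simp_all only: abs_le_iff)
  have 2: "S - A < e/4" "-(S - A) < e/4" using c by (simp_all only: abs_less_iff)
  have 3: "y - g2 \<le> e/4" "-(y - g2) \<le> e/4" using d by (simp_all only: abs_le_iff)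
  have "x - y < e" "-(x - y) < e" using 1 2 3 b f \<open>0 < e\<close> by linarith+
  then show ?thesis by (simp only: abs_less_iff)
qed

lemma part2:
  fixes m :: "'e metric" and M :: "'e measure" and \<gamma> :: "'s::order set \<Rightarrow> ('s \<Rightarrow> 'e) \<Rightarrow> ('s \<Rightarrow> 'e) measure"
    and \<mu> :: "('s \<Rightarrow> 'e) measure" and Lam :: "nat \<Rightarrow> 's set"
  assumes S: "standing_poset TYPE('s)" and pos: "POS M \<gamma>" and ext: "extremal_Gibbs M \<gamma> \<mu>"
    and tb: "\<And>n. time_box (Lam n)" and inc: "incseq Lam" and cover: "(\<Union>n. Lam n) = UNIV"
    and sp: "mspace m = space M" and cp: "compact_space (mtopology_of m)"
    and sM: "sets M = sigma_sets (space M) {U. openin (mtopology_of m) U}"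
  shows "AE \<omega> in \<mu>. \<forall>h. local_fun M h \<and>
               continuous_map (product_topology (\<lambda>_::'s. mtopology_of m) UNIV) euclideanreal h \<longrightarrow>
               (\<lambda>n. \<integral>\<sigma>. h \<sigma> \<partial>(\<gamma> (Lam n) \<omega>)) \<longlonglongrightarrow> (\<integral>\<sigma>. h \<sigma> \<partial>\<mu>)"
proof -
  have g: "Gibbs M \<gamma> \<mu>" using ext unfolding extremal_Gibbs_def by auto
  have pmu: "prob_space \<mu>" and smu: "sets \<mu> = sets (Conf M)" using g unfolding Gibbs_def by auto
  have spmu: "space \<mu> = space (Conf M)" using sets_eq_imp_space_eq[OF smu] .
  interpret pm: prob_space \<mu> by (rule pmu)
  interpret k: kern M "Lam n" "\<gamma> (Lam n)" \<mu> for n by (rule kern_of[OF pos g tb])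
  have cS: "countable (UNIV :: 's set)" using S unfolding standing_poset_def by auto
  have "\<forall>k::nat. \<exists>n cell cen. cellprop M m (1 / real (Suc k)) n cell cen"
    using cells_ex[OF sp cp sM] by simp
  then obtain NC CL CN where cp': "\<And>k. cellprop M m (1 / real (Suc k)) (NC k) (CL k) (CN k)"
    by metis
  have CNs: "CN k j \<in> space M" if "j < NC k" for k j using cp'[of k] that unfolding cellprop_def by auto
  have CLs: "CL k j \<in> sets M" if "j < NC k" for k j using cp'[of k] that unfolding cellprop_def by auto
  have CLcov: "\<exists>j<NC k. e \<in> CL k j" if "e \<in> space M" for k e using cp'[of k] that unfolding cellprop_def by auto
  have CLdis: "CL k i \<inter> CL k j = {}" if "i < NC k" "j < NC k" "i \<noteq> j" for k i j
    using cp'[of k] that unfolding cellprop_def by auto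
  have CLd: "mdist m e (CN k j) < 1 / real (Suc k)" if "j < NC k" "e \<in> CL k j" for k j e
    using cp'[of k] that unfolding cellprop_def by auto
  obtain \<omega>1 :: "'s \<Rightarrow> 'e" where \<omega>1: "\<omega>1 \<in> space (Conf M)" using pm.not_empty spmu by auto
  define e0 where "e0 = \<omega>1 undefined"
  have e0: "e0 \<in> space M" using \<omega>1 unfolding e0_def space_Conf by auto
  define P where "P D k \<phi> = {\<omega>\<in>space (Conf M). \<forall>x\<in>D. \<omega> x \<in> CL k (\<phi> x)}" for D :: "'s set" and k \<phi>
  define I where "I = (SIGMA D:{D :: 's set. finite D}. SIGMA k:(UNIV :: nat set). Pi\<^sub>E D (\<lambda>_. {..<NC k}))"
  have cI: "countable I"
  proof -
    have "countable {D :: 's set. finite D}"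
      using countable_Collect_finite_subset[OF cS] by simp
    moreover have "countable (Pi\<^sub>E D (\<lambda>_. {..<NC k}))" if "finite D" for D k
      using that by (intro countable_finite finite_PiE) auto
    ultimately show ?thesis unfolding I_def by (intro countable_SIGMA) auto
  qed
  have PF: "P D k \<phi> \<in> sets (Fsub M D)" if "finite D" "\<phi> \<in> Pi\<^sub>E D (\<lambda>_. {..<NC k})" for D k \<phi>
  proof (cases "D = {}")
    case True
    then have "P D k \<phi> = space (Fsub M D)" unfolding P_def by simp
    then show ?thesis using sets.top[of "Fsub M D"] by metis
  next
    case False
    have "P D k \<phi> = (\<Inter>x\<in>D. (\<lambda>\<omega>. \<omega> x) -` CL k (\<phi> x) \<inter> space (Conf M))"
      unfolding P_def using False by auto
    also have "\<dots> \<in> sets (Fsub M D)"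
    proof (rule sets.finite_INT)
      fix x assume x: "x \<in> D"
      then have "CL k (\<phi> x) \<in> sets M" using that(2) CLs by auto
      then have "(\<lambda>\<omega>. \<omega> x) -` CL k (\<phi> x) \<inter> space (Conf M) \<in> gens M D" unfolding gens_def using x by blast
      then show "(\<lambda>\<omega>. \<omega> x) -` CL k (\<phi> x) \<inter> space (Conf M) \<in> sets (Fsub M D)"
        unfolding sets_Fsub by (rule sigma_sets.Basic)
    qed (use that False in auto)
    finally show ?thesis .
  qed
  have conv1: "AE \<omega> in \<mu>. (\<lambda>n. \<integral>\<sigma>. (indicator (P D k \<phi>) \<sigma> :: real) \<partial>(\<gamma> (Lam n) \<omega>)) \<longlonglongrightarrow> (\<integral>\<sigma>. (indicator (P D k \<phi>) \<sigma> :: real) \<partial>\<mu>)"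
    if "(D, k, \<phi>) \<in> I" for D k \<phi>
  proof (rule part1[OF pos ext tb inc cover])
    have "finite D" "\<phi> \<in> Pi\<^sub>E D (\<lambda>_. {..<NC k})" using that unfolding I_def by auto
    then show "local_fun M (indicator (P D k \<phi>) :: _ \<Rightarrow> real)"
      unfolding local_fun_def using PF by (intro exI[of _ D]) auto
    show "bounded_fun M (indicator (P D k \<phi>) :: _ \<Rightarrow> real)"
      unfolding bounded_fun_def by (intro exI[of _ 1]) (auto simp: indicator_def)
  qed
  have "AE \<omega> in \<mu>. \<forall>i\<in>I. (\<lambda>n. \<integral>\<sigma>. (indicator (P (fst i) (fst (snd i)) (snd (snd i))) \<sigma> :: real) \<partial>(\<gamma> (Lam n) \<omega>))
          \<longlonglongrightarrow> (\<integral>\<sigma>. (indicator (P (fst i) (fst (snd i)) (snd (snd i))) \<sigma> :: real) \<partial>\<mu>)"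
    using cI conv1 by (subst AE_ball_countable) auto
  then show ?thesis using AE_space
  proof eventually_elim
    case (elim \<omega>)
    then have \<omega>: "\<omega> \<in> space (Conf M)" using spmu by simp
    have cv: "(\<lambda>n. \<integral>\<sigma>. (indicator (P D k \<phi>) \<sigma> :: real) \<partial>(\<gamma> (Lam n) \<omega>)) \<longlonglongrightarrow> (\<integral>\<sigma>. (indicator (P D k \<phi>) \<sigma> :: real) \<partial>\<mu>)"
      if "(D, k, \<phi>) \<in> I" for D k \<phi> using elim(1) that by force
    show ?case
    proof (intro allI impI, elim conjE)
      fix h :: "('s \<Rightarrow> 'e) \<Rightarrow> real"
      assume hl: "local_fun M h" and hc: "continuous_map (product_topology (\<lambda>_::'s. mtopology_of m) UNIV) euclideanreal h"
      obtain D where fD: "finite D" and hD: "h \<in> borel_measurable (Fsub M D)" using hl unfolding local_fun_def by auto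
      obtain n0 where n0: "D \<subseteq> Lam n0" using finite_in_seq[OF fD inc cover] by auto
      have DL: "D \<subseteq> Lam n" if "n0 \<le> n" for n using n0 inc that unfolding incseq_def by blast
      show "(\<lambda>n. \<integral>\<sigma>. h \<sigma> \<partial>(\<gamma> (Lam n) \<omega>)) \<longlonglongrightarrow> (\<integral>\<sigma>. h \<sigma> \<partial>\<mu>)"
      proof (rule LIMSEQ_I)
        fix \<epsilon> :: real assume \<epsilon>: "0 < \<epsilon>"
        obtain \<delta> where \<delta>: "0 < \<delta>" "\<And>\<sigma> \<tau>. \<sigma> \<in> space (Conf M) \<Longrightarrow> \<tau> \<in> space (Conf M) \<Longrightarrow>
            (\<forall>x\<in>D. mdist m (\<sigma> x) (\<tau> x) < \<delta>) \<Longrightarrow> \<bar>h \<sigma> - h \<tau>\<bar> < \<epsilon>/4"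
          using unif_cont[OF sp cp hD fD hc, of "\<epsilon>/4"] \<epsilon> by auto
        obtain k where k: "inverse (real (Suc k)) < \<delta>" using reals_Archimedean[OF \<delta>(1)] by auto
        define \<Phi> where "\<Phi> = Pi\<^sub>E D (\<lambda>_. {..<NC k})"
        have f\<Phi>: "finite \<Phi>" unfolding \<Phi>_def using fD by (intro finite_PiE) auto
        have I\<Phi>: "(D, k, \<phi>) \<in> I" if "\<phi> \<in> \<Phi>" for \<phi> using that fD unfolding I_def \<Phi>_def by auto
        define rep where "rep \<phi> x = (if x \<in> D then CN k (\<phi> x) else e0)" for \<phi> x
        have reps: "rep \<phi> \<in> space (Conf M)" if "\<phi> \<in> \<Phi>" for \<phi>
          using that e0 CNs unfolding rep_def \<Phi>_def space_Conf by (auto simp: PiE_iff)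
        define gg where "gg \<sigma> = (\<Sum>\<phi>\<in>\<Phi>. h (rep \<phi>) * indicator (P D k \<phi>) \<sigma>)" for \<sigma>
        define Bg where "Bg = (\<Sum>\<phi>\<in>\<Phi>. \<bar>h (rep \<phi>)\<bar>)"
        have ggb: "\<bar>gg \<sigma>\<bar> \<le> Bg" for \<sigma>
        proof -
          have "\<bar>gg \<sigma>\<bar> \<le> (\<Sum>\<phi>\<in>\<Phi>. \<bar>h (rep \<phi>) * indicator (P D k \<phi>) \<sigma>\<bar>)" unfolding gg_def by (rule sum_abs)
          also have "\<dots> \<le> Bg" unfolding Bg_def
            by (intro sum_mono) (auto simp: indicator_def abs_mult)
          finally show ?thesis .
        qed
        have approx: "\<bar>h \<sigma> - gg \<sigma>\<bar> \<le> \<epsilon>/4" if \<sigma>: "\<sigma> \<in> space (Conf M)" for \<sigma>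
        proof -
          define \<phi>\<sigma> where "\<phi>\<sigma> x = (if x \<in> D then (SOME j. j < NC k \<and> \<sigma> x \<in> CL k j) else undefined)" for x
          have \<sigma>x: "\<sigma> x \<in> space M" for x using \<sigma> unfolding space_Conf by auto
          have sj: "\<phi>\<sigma> x < NC k \<and> \<sigma> x \<in> CL k (\<phi>\<sigma> x)" if "x \<in> D" for x
            unfolding \<phi>\<sigma>_def using that someI_ex[OF CLcov[OF \<sigma>x, of k x]] by auto
          have \<phi>in: "\<phi>\<sigma> \<in> \<Phi>" unfolding \<Phi>_def using sj by (auto simp: PiE_iff \<phi>\<sigma>_def extensional_def)
          have inP: "\<sigma> \<in> P D k \<phi>\<sigma>" unfolding P_def using \<sigma> sj by auto
          have notP: "\<sigma> \<notin> P D k \<phi>" if \<phi>\<Phi>: "\<phi> \<in> \<Phi>" and ne: "\<phi> \<noteq> \<phi>\<sigma>" for \<phi>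
          proof
            assume a: "\<sigma> \<in> P D k \<phi>"
            obtain x where x: "\<phi> x \<noteq> \<phi>\<sigma> x" using ne by auto
            have xD: "x \<in> D"
            proof (rule ccontr)
              assume "x \<notin> D"
              then have "\<phi> x = undefined" "\<phi>\<sigma> x = undefined"
                using \<phi>\<Phi> unfolding \<Phi>_def \<phi>\<sigma>_def by (auto simp: PiE_iff extensional_def)
              then show False using x by simp
            qed
            have "\<phi> x < NC k" using \<phi>\<Phi> xD unfolding \<Phi>_def by auto
            moreover have "\<sigma> x \<in> CL k (\<phi> x)" using a xD unfolding P_def by auto
            ultimately show False using sj[OF xD] CLdis[of "\<phi> x" k "\<phi>\<sigma> x"] x by auto
          qed
          have "gg \<sigma> = h (rep \<phi>\<sigma>)"
          proof -
            have "gg \<sigma> = (\<Sum>\<phi>\<in>\<Phi>. if \<phi> = \<phi>\<sigma> then h (rep \<phi>\<sigma>) else 0)"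
              unfolding gg_def using inP notP by (intro sum.cong) auto
            also have "\<dots> = h (rep \<phi>\<sigma>)" using f\<Phi> \<phi>in by simp
            finally show ?thesis .
          qed
          moreover have "\<bar>h \<sigma> - h (rep \<phi>\<sigma>)\<bar> < \<epsilon>/4"
          proof (rule \<delta>(2)[OF \<sigma> reps[OF \<phi>in]], intro ballI)
            fix x assume xD: "x \<in> D"
            have "mdist m (\<sigma> x) (CN k (\<phi>\<sigma> x)) < 1 / real (Suc k)" using CLd sj[OF xD] by blast
            also have "\<dots> < \<delta>" using k by (simp add: inverse_eq_divide)
            finally show "mdist m (\<sigma> x) (rep \<phi>\<sigma> x) < \<delta>" unfolding rep_def using xD by simp
          qed
          ultimately show ?thesis by simp
        qed
        have ints: "\<bar>(\<integral>\<sigma>. h \<sigma> \<partial>\<nu>) - (\<integral>\<sigma>. gg \<sigma> \<partial>\<nu>)\<bar> \<le> \<epsilon>/4 \<and>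
               (\<integral>\<sigma>. gg \<sigma> \<partial>\<nu>) = (\<Sum>\<phi>\<in>\<Phi>. h (rep \<phi>) * (\<integral>\<sigma>. (indicator (P D k \<phi>) \<sigma> :: real) \<partial>\<nu>))"
          if \<nu>: "prob_space \<nu>" "space \<nu> = space (Conf M)" "sets (Fsub M D) \<subseteq> sets \<nu>" for \<nu>
        proof -
          interpret pn: prob_space \<nu> by (rule \<nu>(1))
          have sub: "subalgebra \<nu> (Fsub M D)" unfolding subalgebra_def using \<nu> by simp
          have hm: "h \<in> borel_measurable \<nu>" using measurable_from_subalg[OF sub hD] .
          have Pm: "P D k \<phi> \<in> sets \<nu>" if "\<phi> \<in> \<Phi>" for \<phi> using PF[OF fD, of \<phi> k] that \<nu>(3) unfolding \<Phi>_def by auto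
          have im: "integrable \<nu> (\<lambda>\<sigma>. h (rep \<phi>) * indicator (P D k \<phi>) \<sigma>)" if "\<phi> \<in> \<Phi>" for \<phi>
            using Pm[OF that] by (intro integrable_mult_right integrable_real_indicator) (auto simp: pn.emeasure_eq_measure)
          have gm: "gg \<in> borel_measurable \<nu>" unfolding gg_def
            using Pm by (intro borel_measurable_sum borel_measurable_times borel_measurable_const borel_measurable_indicator) auto
          have "\<bar>(\<integral>\<sigma>. h \<sigma> \<partial>\<nu>) - (\<integral>\<sigma>. gg \<sigma> \<partial>\<nu>)\<bar> \<le> \<epsilon>/4"
            by (rule approx_int[OF \<nu>(1) hm gm, of _ Bg]) (use approx ggb \<nu>(2) in auto)
          moreover have "(\<integral>\<sigma>. gg \<sigma> \<partial>\<nu>) = (\<Sum>\<phi>\<in>\<Phi>. h (rep \<phi>) * (\<integral>\<sigma>. (indicator (P D k \<phi>) \<sigma> :: real) \<partial>\<nu>))"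
          proof -
            have "(\<integral>\<sigma>. gg \<sigma> \<partial>\<nu>) = (\<Sum>\<phi>\<in>\<Phi>. \<integral>\<sigma>. h (rep \<phi>) * indicator (P D k \<phi>) \<sigma> \<partial>\<nu>)"
              unfolding gg_def by (rule Bochner_Integration.integral_sum[OF im])
            then show ?thesis by simp
          qed
          ultimately show ?thesis by simp
        qed
        have sF: "sets (Fsub M D) \<subseteq> sets \<mu>" using sets_Fsub_Conf smu by simp
        note mi = ints[OF pmu spmu sF]
        have gi: "\<bar>(\<integral>\<sigma>. h \<sigma> \<partial>\<gamma> (Lam n) \<omega>) - (\<integral>\<sigma>. gg \<sigma> \<partial>\<gamma> (Lam n) \<omega>)\<bar> \<le> \<epsilon>/4 \<and>
               (\<integral>\<sigma>. gg \<sigma> \<partial>\<gamma> (Lam n) \<omega>) = (\<Sum>\<phi>\<in>\<Phi>. h (rep \<phi>) * (\<integral>\<sigma>. (indicator (P D k \<phi>) \<sigma> :: real) \<partial>\<gamma> (Lam n) \<omega>))"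
          if "n0 \<le> n" for n
        proof (rule ints)
          show "prob_space (\<gamma> (Lam n) \<omega>)" by (rule k.K_prob[OF \<omega>])
          show "space (\<gamma> (Lam n) \<omega>) = space (Conf M)" by (rule k.K_space[OF \<omega>])
          show "sets (Fsub M D) \<subseteq> sets (\<gamma> (Lam n) \<omega>)"
            using k.K_sets[OF \<omega>, of n] sets_Fsub_mono[OF fut_sub[OF DL[OF that]], of M] by simp
        qed
        define A where "A = (\<Sum>\<phi>\<in>\<Phi>. h (rep \<phi>) * (\<integral>\<sigma>. (indicator (P D k \<phi>) \<sigma> :: real) \<partial>\<mu>))"
        have "(\<lambda>n. \<Sum>\<phi>\<in>\<Phi>. h (rep \<phi>) * (\<integral>\<sigma>. (indicator (P D k \<phi>) \<sigma> :: real) \<partial>\<gamma> (Lam n) \<omega>)) \<longlonglongrightarrow> A"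
          unfolding A_def by (intro tendsto_sum tendsto_mult_left cv I\<Phi>)
        then obtain N1 where N1: "\<forall>n\<ge>N1. norm ((\<Sum>\<phi>\<in>\<Phi>. h (rep \<phi>) * (\<integral>\<sigma>. (indicator (P D k \<phi>) \<sigma> :: real) \<partial>\<gamma> (Lam n) \<omega>)) - A) < \<epsilon>/4"
          using LIMSEQ_D[of _ A "\<epsilon>/4"] \<epsilon> by auto
        show "\<exists>no. \<forall>n\<ge>no. norm ((\<integral>\<sigma>. h \<sigma> \<partial>\<gamma> (Lam n) \<omega>) - (\<integral>\<sigma>. h \<sigma> \<partial>\<mu>)) < \<epsilon>"
        proof (intro exI[of _ "max n0 N1"] allI impI)
          fix n assume n: "max n0 N1 \<le> n"
          have a: "\<bar>(\<integral>\<sigma>. h \<sigma> \<partial>\<gamma> (Lam n) \<omega>) - (\<integral>\<sigma>. gg \<sigma> \<partial>\<gamma> (Lam n) \<omega>)\<bar> \<le> \<epsilon>/4"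
            and b: "(\<integral>\<sigma>. gg \<sigma> \<partial>\<gamma> (Lam n) \<omega>) = (\<Sum>\<phi>\<in>\<Phi>. h (rep \<phi>) * (\<integral>\<sigma>. (indicator (P D k \<phi>) \<sigma> :: real) \<partial>\<gamma> (Lam n) \<omega>))"
            using gi[of n] n by auto
          have c: "\<bar>(\<Sum>\<phi>\<in>\<Phi>. h (rep \<phi>) * (\<integral>\<sigma>. (indicator (P D k \<phi>) \<sigma> :: real) \<partial>\<gamma> (Lam n) \<omega>)) - A\<bar> < \<epsilon>/4"
            using N1 n by auto
          have d: "\<bar>(\<integral>\<sigma>. h \<sigma> \<partial>\<mu>) - (\<integral>\<sigma>. gg \<sigma> \<partial>\<mu>)\<bar> \<le> \<epsilon>/4" and e: "(\<integral>\<sigma>. gg \<sigma> \<partial>\<mu>) = A"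
            using mi unfolding A_def by auto
          show "norm ((\<integral>\<sigma>. h \<sigma> \<partial>\<gamma> (Lam n) \<omega>) - (\<integral>\<sigma>. h \<sigma> \<partial>\<mu>)) < \<epsilon>"
            unfolding real_norm_def by (rule tri[OF a b c d e \<epsilon>])
        qed
      qed
    qed
  qed
qed


theorem mainTheorem6:
  fixes M :: "'e measure"
    and \<gamma> :: "'s::order set \<Rightarrow> ('s \<Rightarrow> 'e) \<Rightarrow> ('s \<Rightarrow> 'e) measure"
    and \<mu> :: "('s \<Rightarrow> 'e) measure"
    and Lam :: "nat \<Rightarrow> 's set"
  assumes S: "standing_poset TYPE('s)"
    and pos: "POS M \<gamma>"
    and ext: "extremal_Gibbs M \<gamma> \<mu>"
    and tb: "\<And>n. time_box (Lam n)"
    and inc: "incseq Lam"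
    and cover: "(\<Union>n. Lam n) = UNIV"
  shows "(\<forall>h. local_fun M h \<and> bounded_fun M h \<longrightarrow>
            (AE \<omega> in \<mu>. (\<lambda>n. \<integral>\<sigma>. h \<sigma> \<partial>(\<gamma> (Lam n) \<omega>)) \<longlonglongrightarrow> (\<integral>\<sigma>. h \<sigma> \<partial>\<mu>)))
       \<and> (\<forall>m :: 'e metric.
            mspace m = space M \<and> compact_space (mtopology_of m) \<and>
            sets M = sigma_sets (space M) {U. openin (mtopology_of m) U} \<longrightarrow>
            (AE \<omega> in \<mu>. \<forall>h. local_fun M h \<and>
               continuous_map (product_topology (\<lambda>_::'s. mtopology_of m) UNIV) euclideanreal h \<longrightarrow>
               (\<lambda>n. \<integral>\<sigma>. h \<sigma> \<partial>(\<gamma> (Lam n) \<omega>)) \<longlonglongrightarrow> (\<integral>\<sigma>. h \<sigma> \<partial>\<mu>)))"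
proof (intro conjI allI impI)
  fix h :: "('s \<Rightarrow> 'e) \<Rightarrow> real"
  assume "local_fun M h \<and> bounded_fun M h"
  then show "AE \<omega> in \<mu>. (\<lambda>n. \<integral>\<sigma>. h \<sigma> \<partial>(\<gamma> (Lam n) \<omega>)) \<longlonglongrightarrow> (\<integral>\<sigma>. h \<sigma> \<partial>\<mu>)"
    using part1[OF pos ext tb inc cover] by blast
next
  fix m :: "'e metric"
  assume "mspace m = space M \<and> compact_space (mtopology_of m) \<and>
            sets M = sigma_sets (space M) {U. openin (mtopology_of m) U}"
  then show "AE \<omega> in \<mu>. \<forall>h. local_fun M h \<and>
               continuous_map (product_topology (\<lambda>_::'s. mtopology_of m) UNIV) euclideanreal h \<longrightarrow>
               (\<lambda>n. \<integral>\<sigma>. h \<sigma> \<partial>(\<gamma> (Lam n) \<omega>)) \<longlonglongrightarrow> (\<integral>\<sigma>. h \<sigma> \<partial>\<mu>)"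
    using part2[OF S pos ext tb inc cover] by blast
qed

end
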